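(* Let $n\ge1$, $m\ge3$ be integers, $q$ a prime power, $\mathbf{x}\in\mathbb{F}_q^n$ and $a=x_1+\cdots+x_n$. Then $$\mathbb{E}_{\pi,\pi'\sim\Pi_{mn},\ \mathbf{t}\sim\mathcal{U}_a}\left[Y_{\mathbf{t},\pi}\,Y_{\mathbf{t},\pi'}\right]\le\sum_{k\ge1}\frac{q^k}{q^{2n-1}}\left(\frac{n^2}{(n/2)^{m-2}}\right)^{\frac{k-1}{2}},$$ where $\pi,\pi',\mathbf{t}$ are independent.
   Context: $\Pi_{mn}$ is the set of permutations of $[mn]$, and $\pi\sim\Pi_{mn}$ means $\pi$ is uniform on it. $\mathcal{U}_a$ is the uniform distribution on vectors in $\mathbb{F}_q^{mn}$ whose coordinates sum to $a$. For $\mathbf{t}\in\mathbb{F}_q^{mn}$ and $\pi\in\Pi_{mn}$, $Y_{\mathbf{t},\pi}$ is the indicator that $t_{\pi(m(i-1)+1)}+\cdots+t_{\pi(mi)}=x_i$ for all $i\in[n]$. *)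

theory Defs
  imports "HOL-Analysis.Analysis" "HOL-Library.Extended_Nonnegative_Real"
begin

text \<open>Indices are 0-based: [mn] is rendered as {0..<m*n}, block i (0 \<le> i < n) is
  {m*i, ..., m*i+m-1}. The finite field F_q is a finite field type 'a with q = CARD('a).\<close>

definition perms :: "nat \<Rightarrow> (nat \<Rightarrow> nat) set" where
  "perms N = {\<pi>. \<pi> permutes {0..<N}}"

text \<open>Support of U_a: vectors in F_q^N (extensional functions on {0..<N}) with coordinate sum a.\<close>
definition vecs_sum :: "nat \<Rightarrow> 'a::{field,finite} \<Rightarrow> (nat \<Rightarrow> 'a) set" where
  "vecs_sum N a = {t \<in> {0..<N} \<rightarrow>\<^sub>E (UNIV :: 'a set). (\<Sum>j<N. t j) = a}"

definition Y :: "nat \<Rightarrow> nat \<Rightarrow> (nat \<Rightarrow> 'a::{field,finite}) \<Rightarrow> (nat \<Rightarrow> 'a)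
                  \<Rightarrow> (nat \<Rightarrow> nat) \<Rightarrow> real" where
  "Y m n x t \<pi> = (if \<forall>i<n. (\<Sum>j<m. t (\<pi> (m*i + j))) = x i then 1 else 0)"

definition second_moment :: "nat \<Rightarrow> nat \<Rightarrow> (nat \<Rightarrow> 'a::{field,finite}) \<Rightarrow> real" where
  "second_moment m n x =
     (let a = (\<Sum>i<n. x i); P = perms (m*n); T = vecs_sum (m*n) a in
      (\<Sum>\<pi>\<in>P. \<Sum>\<pi>'\<in>P. \<Sum>t\<in>T. Y m n x t \<pi> * Y m n x t \<pi>')
        / (real (card P) * real (card P) * real (card T)))"

end

theory Submission
  imports Defs
begin



definition sols :: "'e set \<Rightarrow> 'i set \<Rightarrow> 'j set \<Rightarrow> ('e\<Rightarrow>'i) \<Rightarrow> ('e\<Rightarrow>'j) \<Rightarrow> ('i\<Rightarrow>'a::field) \<Rightarrow> ('j\<Rightarrow>'a) \<Rightarrow> ('e\<Rightarrow>'a) set" where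
 "sols E I J a b y z = {t \<in> E \<rightarrow>\<^sub>E UNIV. (\<forall>i\<in>I. (\<Sum>e\<in>{e\<in>E. a e = i}. t e) = y i) \<and> (\<forall>j\<in>J. (\<Sum>e\<in>{e\<in>E. b e = j}. t e) = z j)}"

definition LL :: "'e set \<Rightarrow> 'i set \<Rightarrow> 'j set \<Rightarrow> ('e\<Rightarrow>'i) \<Rightarrow> ('e\<Rightarrow>'j) \<Rightarrow> (('i\<Rightarrow>'a::field) \<times> ('j\<Rightarrow>'a)) set" where
 "LL E I J a b = {(\<alpha>,\<gamma>). \<alpha> \<in> I \<rightarrow>\<^sub>E UNIV \<and> \<gamma> \<in> J \<rightarrow>\<^sub>E UNIV \<and> (\<forall>e\<in>E. \<alpha> (a e) = \<gamma> (b e))}"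

lemma pair_id:
  fixes \<alpha> :: "'i \<Rightarrow> 'a::field"
  assumes "finite E" "finite I" "a ` E \<subseteq> I"
  shows "(\<Sum>i\<in>I. \<alpha> i * (\<Sum>e\<in>{e\<in>E. a e = i}. t e)) = (\<Sum>e\<in>E. \<alpha> (a e) * t e)"
proof -
  have "(\<Sum>i\<in>I. \<alpha> i * (\<Sum>e\<in>{e\<in>E. a e = i}. t e)) = (\<Sum>i\<in>I. \<Sum>e\<in>{e\<in>E. a e = i}. \<alpha> (a e) * t e)"
    by (simp add: sum_distrib_left)
  also have "\<dots> = (\<Sum>e\<in>E. \<alpha> (a e) * t e)"
    using sum.group[OF assms(1,2,3), of "\<lambda>e. \<alpha> (a e) * t e"] by simp
  finally show ?thesis .
qed

lemma sum_upd_lin: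
  fixes f :: "'i \<Rightarrow> 'a::field"
  assumes "finite I" "i0 \<in> I"
  shows "(\<Sum>i\<in>I. f i * (y(i0 := y i0 - w)) i) = (\<Sum>i\<in>I. f i * y i) - f i0 * w"
proof -
  have "(\<Sum>i\<in>I. f i * (y(i0 := y i0 - w)) i) = f i0 * (y i0 - w) + (\<Sum>i\<in>I-{i0}. f i * y i)"
    using assms by (simp add: sum.remove)
  also have "(\<Sum>i\<in>I. f i * y i) = f i0 * y i0 + (\<Sum>i\<in>I-{i0}. f i * y i)"
    using assms by (simp add: sum.remove)
  ultimately show ?thesis by (simp add: algebra_simps)
qed

lemma sum_insert_split:
  assumes "finite E" "e0 \<notin> E"
  shows "(\<Sum>e\<in>{e\<in>insert e0 E. a e = i}. t e) = (if a e0 = i then t e0 else 0) + (\<Sum>e\<in>{e\<in>E. a e = i}. t e)"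
proof -
  have "{e\<in>insert e0 E. a e = i} = (if a e0 = i then insert e0 {e\<in>E. a e = i} else {e\<in>E. a e = i})"
    by auto
  then show ?thesis using assms by auto
qed

lemma lemA:
  fixes a :: "'e \<Rightarrow> 'i" and b :: "'e \<Rightarrow> 'j"
  assumes fI: "finite I" and fJ: "finite J"
  shows "finite E \<Longrightarrow> a ` E \<subseteq> I \<Longrightarrow> b ` E \<subseteq> J \<Longrightarrow>
    card (sols E I J a b (y::'i\<Rightarrow>'a::{field,finite}) z) * CARD('a)^(card I + card J)
     \<le> CARD('a)^(card E) * card (LL E I J a b :: (('i\<Rightarrow>'a) \<times> ('j\<Rightarrow>'a)) set)"
proof (induction E arbitrary: y z rule: finite_induct)
  case empty
  have "sols {} I J a b y z \<subseteq> {\<lambda>_. undefined}" unfolding sols_def by auto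
  hence "card (sols {} I J a b y z) \<le> card {\<lambda>_::'e. undefined::'a}"
    by (intro card_mono) auto
  hence "card (sols {} I J a b y z) \<le> 1" by simp
  moreover have "LL {} I J a b = (I \<rightarrow>\<^sub>E (UNIV::'a set)) \<times> (J \<rightarrow>\<^sub>E (UNIV::'a set))"
    unfolding LL_def by (simp add: set_eq_iff)
  hence "card (LL {} I J a b :: (('i\<Rightarrow>'a) \<times> ('j\<Rightarrow>'a)) set) = CARD('a)^(card I + card J)"
    using fI fJ by (simp add: card_funcsetE card_cartesian_product power_add)
  ultimately show ?case by simp
next
  case (insert e0 E)
  define q where "q = CARD('a)"
  define i0 where "i0 = a e0"
  define j0 where "j0 = b e0"
  have i0I: "i0 \<in> I" and j0J: "j0 \<in> J" using insert.prems i0_def j0_def by auto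
  have aE: "a ` E \<subseteq> I" and bE: "b ` E \<subseteq> J" using insert.prems by auto
  define Y where "Y w = sols E I J a b (y(i0 := y i0 - w)) (z(j0 := z j0 - w))" for w
  have finY: "finite (Y w)" for w
    unfolding Y_def sols_def by (rule finite_subset[OF _ finite_PiE[OF insert.hyps(1)]]) auto
  have IH: "card (Y w) * q^(card I + card J) \<le> q^(card E) * card (LL E I J a b :: (('i\<Rightarrow>'a) \<times> ('j\<Rightarrow>'a)) set)" for w
    unfolding Y_def q_def using insert.IH[OF aE bE] .
  have step1: "card (sols (insert e0 E) I J a b y z) \<le> (\<Sum>w\<in>UNIV. card (Y w))"
  proof -
    have "card (sols (insert e0 E) I J a b y z) \<le> card (SIGMA w:UNIV. Y w)"
    proof (rule card_inj_on_le[where f="\<lambda>t. (t e0, restrict t E)"])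
      show "finite (SIGMA w:UNIV. Y w)" using finY by auto
      show "inj_on (\<lambda>t. (t e0, restrict t E)) (sols (insert e0 E) I J a b y z)"
      proof (rule inj_onI)
        fix t1 t2 assume t1: "t1 \<in> sols (insert e0 E) I J a b y z" and t2: "t2 \<in> sols (insert e0 E) I J a b y z"
          and eq: "(t1 e0, restrict t1 E) = (t2 e0, restrict t2 E)"
        have "t1 \<in> insert e0 E \<rightarrow>\<^sub>E UNIV" "t2 \<in> insert e0 E \<rightarrow>\<^sub>E UNIV" using t1 t2 unfolding sols_def by auto
        then show "t1 = t2"
        proof (intro extensionalityI[of _ "insert e0 E"])
          fix e assume "e \<in> insert e0 E"
          moreover have "restrict t1 E e = restrict t2 E e" using eq by simp
          ultimately show "t1 e = t2 e" using eq by (cases "e = e0") auto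
        qed (auto simp: PiE_iff)
      qed
      have mem: "restrict t E \<in> Y (t e0)" if t: "t \<in> sols (insert e0 E) I J a b y z" for t
      proof -
        have rs: "(\<Sum>e\<in>{e\<in>E. c e = k}. restrict t E e) = (\<Sum>e\<in>{e\<in>E. c e = k}. t e)" for c :: "'e \<Rightarrow> 'k" and k
          by (rule sum.cong) auto
        show "restrict t E \<in> Y (t e0)"
          unfolding Y_def sols_def
        proof (intro CollectI conjI ballI)
          show "restrict t E \<in> E \<rightarrow>\<^sub>E UNIV" by auto
        next
          fix i assume "i \<in> I"
          then have "(\<Sum>e\<in>{e\<in>insert e0 E. a e = i}. t e) = y i" using t unfolding sols_def by auto
          then show "(\<Sum>e\<in>{e\<in>E. a e = i}. restrict t E e) = (y(i0 := y i0 - t e0)) i"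
            unfolding rs using sum_insert_split[OF insert.hyps(1,2), where a=a and i=i and t=t] i0_def
            by (auto simp: algebra_simps split: if_splits)
        next
          fix j assume "j \<in> J"
          then have "(\<Sum>e\<in>{e\<in>insert e0 E. b e = j}. t e) = z j" using t unfolding sols_def by auto
          then show "(\<Sum>e\<in>{e\<in>E. b e = j}. restrict t E e) = (z(j0 := z j0 - t e0)) j"
            unfolding rs using sum_insert_split[OF insert.hyps(1,2), where a=b and i=j and t=t] j0_def
            by (auto simp: algebra_simps split: if_splits)
        qed
      qed
      show "(\<lambda>t. (t e0, restrict t E)) ` sols (insert e0 E) I J a b y z \<subseteq> (SIGMA w:UNIV. Y w)"
        using mem by auto
    qed
    also have "\<dots> = (\<Sum>w\<in>UNIV. card (Y w))" using finY by simp
    finally show ?thesis .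
  qed
  have LLsub: "LL (insert e0 E) I J a b = {l \<in> LL E I J a b. fst l i0 = snd l j0}"
    unfolding LL_def i0_def j0_def by auto
  show ?case
  proof (cases "\<forall>l\<in>(LL E I J a b :: (('i\<Rightarrow>'a) \<times> ('j\<Rightarrow>'a)) set). fst l i0 = snd l j0")
    case True
    hence LLeq: "(LL (insert e0 E) I J a b :: (('i\<Rightarrow>'a) \<times> ('j\<Rightarrow>'a)) set) = LL E I J a b" using LLsub by auto
    have "card (sols (insert e0 E) I J a b y z) * q^(card I + card J) \<le> (\<Sum>w\<in>UNIV. card (Y w)) * q^(card I + card J)"
      using step1 by simp
    also have "\<dots> = (\<Sum>w\<in>UNIV. card (Y w) * q^(card I + card J))" by (simp add: sum_distrib_right)
    also have "\<dots> \<le> (\<Sum>w\<in>(UNIV::'a set). q^(card E) * card (LL E I J a b :: (('i\<Rightarrow>'a) \<times> ('j\<Rightarrow>'a)) set))"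
      by (rule sum_mono) (rule IH)
    also have "\<dots> = q^(card (insert e0 E)) * card (LL (insert e0 E) I J a b :: (('i\<Rightarrow>'a) \<times> ('j\<Rightarrow>'a)) set)"
      using insert.hyps LLeq by (simp add: q_def)
    finally show ?thesis unfolding q_def .
  next
    case False
    then obtain \<alpha>0 \<gamma>0 where l0: "(\<alpha>0, \<gamma>0) \<in> (LL E I J a b :: (('i\<Rightarrow>'a) \<times> ('j\<Rightarrow>'a)) set)" and ne: "\<alpha>0 i0 \<noteq> \<gamma>0 j0"
      by auto
    have a0: "\<alpha>0 \<in> I \<rightarrow>\<^sub>E UNIV" "\<gamma>0 \<in> J \<rightarrow>\<^sub>E UNIV" "\<forall>e\<in>E. \<alpha>0 (a e) = \<gamma>0 (b e)" using l0 unfolding LL_def by auto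
    have key: "(\<Sum>i\<in>I. \<alpha>0 i * y i) - \<alpha>0 i0 * w = (\<Sum>j\<in>J. \<gamma>0 j * z j) - \<gamma>0 j0 * w"
      if "t \<in> Y w" for t w
    proof -
      have ty: "\<forall>i\<in>I. (\<Sum>e\<in>{e\<in>E. a e = i}. t e) = (y(i0 := y i0 - w)) i"
        and tz: "\<forall>j\<in>J. (\<Sum>e\<in>{e\<in>E. b e = j}. t e) = (z(j0 := z j0 - w)) j"
        using that unfolding Y_def sols_def by auto
      have "(\<Sum>i\<in>I. \<alpha>0 i * y i) - \<alpha>0 i0 * w = (\<Sum>i\<in>I. \<alpha>0 i * (y(i0 := y i0 - w)) i)"
        by (rule sum_upd_lin[OF fI i0I, symmetric])
      also have "\<dots> = (\<Sum>i\<in>I. \<alpha>0 i * (\<Sum>e\<in>{e\<in>E. a e = i}. t e))" using ty by simp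
      also have "\<dots> = (\<Sum>e\<in>E. \<alpha>0 (a e) * t e)" by (rule pair_id[OF insert.hyps(1) fI aE])
      also have "\<dots> = (\<Sum>e\<in>E. \<gamma>0 (b e) * t e)" using a0(3) by simp
      also have "\<dots> = (\<Sum>j\<in>J. \<gamma>0 j * (\<Sum>e\<in>{e\<in>E. b e = j}. t e))" by (rule pair_id[OF insert.hyps(1) fJ bE, symmetric])
      also have "\<dots> = (\<Sum>j\<in>J. \<gamma>0 j * (z(j0 := z j0 - w)) j)" using tz by simp
      also have "\<dots> = (\<Sum>j\<in>J. \<gamma>0 j * z j) - \<gamma>0 j0 * w"
        by (rule sum_upd_lin[OF fJ j0J])
      finally show ?thesis .
    qed
    have uniq: "w1 = w2" if ne1: "Y w1 \<noteq> {}" and ne2: "Y w2 \<noteq> {}" for w1 w2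
    proof -
      obtain t1 t2 where "t1 \<in> Y w1" "t2 \<in> Y w2" using ne1 ne2 by auto
      from key[OF this(1)] key[OF this(2)]
      have "(\<alpha>0 i0 - \<gamma>0 j0) * (w1 - w2) = 0" by algebra
      then show ?thesis using ne by simp
    qed
    have card2a: "card (LL E I J a b :: (('i\<Rightarrow>'a) \<times> ('j\<Rightarrow>'a)) set) \<le> card (LL (insert e0 E) I J a b :: (('i\<Rightarrow>'a) \<times> ('j\<Rightarrow>'a)) set) * q"
    proof -
      define c where "c = inverse (\<alpha>0 i0 - \<gamma>0 j0)"
      define g where "g = (\<lambda>(\<alpha>::'i\<Rightarrow>'a, \<gamma>::'j\<Rightarrow>'a). ((restrict (\<lambda>i. \<alpha> i - (\<alpha> i0 - \<gamma> j0) * c * \<alpha>0 i) I,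
                     restrict (\<lambda>j. \<gamma> j - (\<alpha> i0 - \<gamma> j0) * c * \<gamma>0 j) J), \<alpha> i0 - \<gamma> j0))"
      have finLL: "finite (LL E' I J a b :: (('i\<Rightarrow>'a) \<times> ('j\<Rightarrow>'a)) set)" for E'
        unfolding LL_def
        by (rule finite_subset[OF _ finite_cartesian_product[OF finite_PiE[OF fI, of "\<lambda>_. UNIV::'a set"] finite_PiE[OF fJ, of "\<lambda>_. UNIV::'a set"]]]) auto
      have "card (LL E I J a b :: (('i\<Rightarrow>'a) \<times> ('j\<Rightarrow>'a)) set) \<le> card ((LL (insert e0 E) I J a b :: (('i\<Rightarrow>'a) \<times> ('j\<Rightarrow>'a)) set) \<times> (UNIV::'a set))"
      proof (rule card_inj_on_le[where f=g])
        show "finite ((LL (insert e0 E) I J a b :: (('i\<Rightarrow>'a) \<times> ('j\<Rightarrow>'a)) set) \<times> (UNIV::'a set))"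
          using finLL by simp
        show "inj_on g (LL E I J a b)"
        proof (rule inj_onI, clarify)
          fix \<alpha>1 \<gamma>1 \<alpha>2 \<gamma>2 assume l1: "(\<alpha>1, \<gamma>1) \<in> (LL E I J a b :: (('i\<Rightarrow>'a) \<times> ('j\<Rightarrow>'a)) set)"
            and l2: "(\<alpha>2, \<gamma>2) \<in> (LL E I J a b :: (('i\<Rightarrow>'a) \<times> ('j\<Rightarrow>'a)) set)" and eq: "g (\<alpha>1, \<gamma>1) = g (\<alpha>2, \<gamma>2)"
          have f: "\<alpha>1 i0 - \<gamma>1 j0 = \<alpha>2 i0 - \<gamma>2 j0" using eq unfolding g_def by simp
          have r1: "restrict (\<lambda>i. \<alpha>1 i - (\<alpha>1 i0 - \<gamma>1 j0) * c * \<alpha>0 i) I = restrict (\<lambda>i. \<alpha>2 i - (\<alpha>2 i0 - \<gamma>2 j0) * c * \<alpha>0 i) I"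
           and r2: "restrict (\<lambda>j. \<gamma>1 j - (\<alpha>1 i0 - \<gamma>1 j0) * c * \<gamma>0 j) J = restrict (\<lambda>j. \<gamma>2 j - (\<alpha>2 i0 - \<gamma>2 j0) * c * \<gamma>0 j) J"
            using eq unfolding g_def by auto
          have e1: "\<alpha>1 \<in> I \<rightarrow>\<^sub>E UNIV" "\<gamma>1 \<in> J \<rightarrow>\<^sub>E UNIV" using l1 unfolding LL_def by auto
          have e2: "\<alpha>2 \<in> I \<rightarrow>\<^sub>E UNIV" "\<gamma>2 \<in> J \<rightarrow>\<^sub>E UNIV" using l2 unfolding LL_def by auto
          have "\<alpha>1 = \<alpha>2"
          proof (rule extensionalityI[of _ I])
            fix i assume "i \<in> I"
            then show "\<alpha>1 i = \<alpha>2 i" using fun_cong[OF r1, of i] f by simp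
          qed (use e1 e2 in \<open>auto simp: PiE_iff\<close>)
          moreover have "\<gamma>1 = \<gamma>2"
          proof (rule extensionalityI[of _ J])
            fix j assume "j \<in> J"
            then show "\<gamma>1 j = \<gamma>2 j" using fun_cong[OF r2, of j] f by simp
          qed (use e1 e2 in \<open>auto simp: PiE_iff\<close>)
          ultimately show "\<alpha>1 = \<alpha>2 \<and> \<gamma>1 = \<gamma>2" by simp
        qed
        have gmem: "fst (g (\<alpha>, \<gamma>)) \<in> LL (insert e0 E) I J a b" if l: "(\<alpha>, \<gamma>) \<in> (LL E I J a b :: (('i\<Rightarrow>'a) \<times> ('j\<Rightarrow>'a)) set)" for \<alpha> \<gamma>
        proof -
          have l': "\<alpha> \<in> I \<rightarrow>\<^sub>E UNIV" "\<gamma> \<in> J \<rightarrow>\<^sub>E UNIV" "\<forall>e\<in>E. \<alpha> (a e) = \<gamma> (b e)" using l unfolding LL_def by auto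
          define f where "f = \<alpha> i0 - \<gamma> j0"
          have "f - f * c * (\<alpha>0 i0 - \<gamma>0 j0) = 0" using ne unfolding c_def by (simp add: field_simps)
          then have e0: "\<alpha> i0 - f * c * \<alpha>0 i0 = \<gamma> j0 - f * c * \<gamma>0 j0" unfolding f_def by (simp add: algebra_simps)
          show ?thesis
            unfolding g_def LL_def using l' a0 insert.prems e0 i0I j0J
            by (auto simp: f_def i0_def j0_def image_subset_iff)
        qed
        show "g ` LL E I J a b \<subseteq> LL (insert e0 E) I J a b \<times> UNIV"
        proof (rule image_subsetI)
          fix l assume l: "l \<in> (LL E I J a b :: (('i\<Rightarrow>'a) \<times> ('j\<Rightarrow>'a)) set)"
          obtain \<alpha> \<gamma> where lp: "l = (\<alpha>, \<gamma>)" by (cases l)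
          show "g l \<in> LL (insert e0 E) I J a b \<times> UNIV"
            using gmem[of \<alpha> \<gamma>] l lp by (simp add: mem_Times_iff)
        qed
      qed
      also have "\<dots> = card (LL (insert e0 E) I J a b :: (('i\<Rightarrow>'a) \<times> ('j\<Rightarrow>'a)) set) * q"
        by (simp add: card_cartesian_product q_def)
      finally show ?thesis .
    qed
    have sumY: "(\<Sum>w\<in>UNIV. card (Y w)) * q^(card I + card J) \<le> q^(card E) * card (LL E I J a b :: (('i\<Rightarrow>'a) \<times> ('j\<Rightarrow>'a)) set)"
    proof (cases "\<exists>w. Y w \<noteq> {}")
      case True
      then obtain w1 where w1: "Y w1 \<noteq> {}" by auto
      have "(\<Sum>w\<in>UNIV. card (Y w)) = (\<Sum>w\<in>{w1}. card (Y w))"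
      proof (rule sum.mono_neutral_right)
        show "\<forall>i\<in>UNIV - {w1}. card (Y i) = 0"
        proof
          fix i assume "i \<in> UNIV - {w1}"
          then have "Y i = {}" using uniq[of i w1] w1 by blast
          then show "card (Y i) = 0" by simp
        qed
      qed auto
      then show ?thesis using IH[of w1] by simp
    next
      case False
      then show ?thesis by simp
    qed
    have "card (sols (insert e0 E) I J a b y z) * q^(card I + card J) \<le> (\<Sum>w\<in>UNIV. card (Y w)) * q^(card I + card J)"
      using step1 by simp
    also have "\<dots> \<le> q^(card E) * card (LL E I J a b :: (('i\<Rightarrow>'a) \<times> ('j\<Rightarrow>'a)) set)" by (rule sumY)
    also have "\<dots> \<le> q^(card E) * (card (LL (insert e0 E) I J a b :: (('i\<Rightarrow>'a) \<times> ('j\<Rightarrow>'a)) set) * q)"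
      using card2a by simp
    also have "\<dots> = q^(card (insert e0 E)) * card (LL (insert e0 E) I J a b :: (('i\<Rightarrow>'a) \<times> ('j\<Rightarrow>'a)) set)"
      using insert.hyps by simp
    finally show ?thesis unfolding q_def .
  qed
qed




lemma bij_fiber_card:
  assumes "bij_betw f S S'" "\<forall>p\<in>S. F (f p) = G p"
  shows "card {u\<in>S'. F u = v} = card {p\<in>S. G p = v}"
proof -
  have "bij_betw f {p\<in>S. G p = v} {u\<in>S'. F u = v}"
  proof -
    have "f ` {p\<in>S. G p = v} = {u\<in>S'. F u = v}"
    proof
      show "f ` {p\<in>S. G p = v} \<subseteq> {u\<in>S'. F u = v}" using assms by (auto simp: bij_betw_def)
      show "{u\<in>S'. F u = v} \<subseteq> f ` {p\<in>S. G p = v}"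
      proof
        fix u assume u: "u \<in> {u\<in>S'. F u = v}"
        then obtain p where "p \<in> S" "f p = u" using assms(1) by (auto simp: bij_betw_def)
        then show "u \<in> f ` {p\<in>S. G p = v}" using u assms(2) by force
      qed
    qed
    moreover have "inj_on f {p\<in>S. G p = v}" using assms(1) by (auto simp: bij_betw_def inj_on_def)
    ultimately show ?thesis by (simp add: bij_betw_def)
  qed
  then show ?thesis by (simp add: bij_betw_same_card)
qed

definition BL :: "'e set \<Rightarrow> 'e set \<Rightarrow> ('e \<Rightarrow> 'v) \<Rightarrow> ('e \<Rightarrow> 'v) \<Rightarrow> ('e \<Rightarrow> 'e) set" where
  "BL S S' F G = {f \<in> S \<rightarrow>\<^sub>E S'. bij_betw f S S' \<and> (\<forall>p\<in>S. F (f p) = G p)}"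

lemma lemB:
  fixes F G :: "'e \<Rightarrow> 'v::finite"
  shows "finite S \<Longrightarrow> finite S' \<Longrightarrow> card (BL S S' F G) \<le> (\<Prod>v\<in>UNIV. fact (card {p\<in>S. G p = v}))"
proof (induction S arbitrary: S' rule: finite_induct)
  case empty
  have "BL {} S' F G \<subseteq> {\<lambda>_. undefined}" unfolding BL_def by auto
  hence "card (BL {} S' F G) \<le> card {\<lambda>_::'e. undefined::'e}" by (intro card_mono) auto
  then show ?case by simp
next
  case (insert p0 S)
  define v0 where "v0 = G p0"
  define U where "U = {u\<in>S'. F u = v0}"
  have finU: "finite U" using insert.prems unfolding U_def by simp
  have finBL: "finite (BL S S'' F G)" if "finite S''" for S''
    unfolding BL_def by (rule finite_subset[OF _ finite_PiE[OF insert.hyps(1)]]) (use that in auto)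
  let ?P = "\<lambda>S. (\<Prod>v\<in>UNIV. fact (card {p\<in>S. G p = v}) :: nat)"
  show ?case
  proof (cases "BL (insert p0 S) S' F G = {}")
    case True then show ?thesis by simp
  next
    case False
    then obtain f0 where f0: "f0 \<in> BL (insert p0 S) S' F G" by auto
    have cU: "card U = card {p\<in>insert p0 S. G p = v0}"
      unfolding U_def by (rule bij_fiber_card) (use f0 in \<open>auto simp: BL_def\<close>)
    have cS: "card {p\<in>insert p0 S. G p = v0} = Suc (card {p\<in>S. G p = v0})"
    proof -
      have "{p\<in>insert p0 S. G p = v0} = insert p0 {p\<in>S. G p = v0}" using v0_def by auto
      then show ?thesis using insert.hyps by simp
    qed
    have "card (BL (insert p0 S) S' F G) \<le> card (SIGMA u:U. BL S (S' - {u}) F G)"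
    proof (rule card_inj_on_le[where f="\<lambda>f. (f p0, restrict f S)"])
      show "finite (SIGMA u:U. BL S (S' - {u}) F G)" using finU finBL insert.prems by auto
      show "inj_on (\<lambda>f. (f p0, restrict f S)) (BL (insert p0 S) S' F G)"
      proof (rule inj_onI)
        fix f1 f2 assume f1: "f1 \<in> BL (insert p0 S) S' F G" and f2: "f2 \<in> BL (insert p0 S) S' F G"
          and eq: "(f1 p0, restrict f1 S) = (f2 p0, restrict f2 S)"
        have "f1 \<in> insert p0 S \<rightarrow>\<^sub>E S'" "f2 \<in> insert p0 S \<rightarrow>\<^sub>E S'" using f1 f2 unfolding BL_def by auto
        then show "f1 = f2"
        proof (intro extensionalityI[of _ "insert p0 S"])
          fix e assume "e \<in> insert p0 S"
          moreover have "restrict f1 S e = restrict f2 S e" using eq by simp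
          ultimately show "f1 e = f2 e" using eq by (cases "e = p0") auto
        qed (auto simp: PiE_iff)
      qed
      have mem: "(f p0, restrict f S) \<in> (SIGMA u:U. BL S (S' - {u}) F G)" if f: "f \<in> BL (insert p0 S) S' F G" for f
      proof -
        have fb: "f \<in> insert p0 S \<rightarrow>\<^sub>E S'" "bij_betw f (insert p0 S) S'" "\<forall>p\<in>insert p0 S. F (f p) = G p"
          using f unfolding BL_def by auto
        have "f p0 \<in> U" using fb unfolding U_def v0_def by (auto simp: bij_betw_def)
        moreover have "bij_betw f S (S' - {f p0})"
        proof -
          have "bij_betw f (insert p0 S - {p0}) (S' - {f p0})"
            by (rule bij_betw_DiffI[OF fb(2)]) (use fb(2) in \<open>auto simp: bij_betw_def\<close>)
          then show ?thesis using insert.hyps by simp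
        qed
        then have "bij_betw (restrict f S) S (S' - {f p0})"
          by (rule bij_betw_cong[THEN iffD1, rotated]) simp
        moreover have "restrict f S \<in> S \<rightarrow>\<^sub>E (S' - {f p0})"
          using \<open>bij_betw f S (S' - {f p0})\<close> by (auto simp: bij_betw_def)
        moreover have "\<forall>p\<in>S. F (restrict f S p) = G p" using fb by simp
        ultimately show ?thesis unfolding BL_def by simp
      qed
      show "(\<lambda>f. (f p0, restrict f S)) ` BL (insert p0 S) S' F G \<subseteq> (SIGMA u:U. BL S (S' - {u}) F G)"
        using mem by auto
    qed
    also have "\<dots> = (\<Sum>u\<in>U. card (BL S (S' - {u}) F G))" using finU finBL insert.prems by simp
    also have "\<dots> \<le> (\<Sum>u\<in>U. ?P S)" by (rule sum_mono) (rule insert.IH, use insert.prems in simp)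
    also have "\<dots> = card U * ?P S" by simp
    also have "\<dots> = ?P (insert p0 S)"
    proof -
      have "?P S = fact (card {p\<in>S. G p = v0}) * (\<Prod>v\<in>UNIV-{v0}. fact (card {p\<in>S. G p = v}))"
        by (simp add: prod.remove)
      moreover have "?P (insert p0 S) = fact (card {p\<in>insert p0 S. G p = v0}) * (\<Prod>v\<in>UNIV-{v0}. fact (card {p\<in>insert p0 S. G p = v}))"
        by (simp add: prod.remove)
      moreover have "(\<Prod>v\<in>UNIV-{v0}. fact (card {p\<in>insert p0 S. G p = v}) :: nat) = (\<Prod>v\<in>UNIV-{v0}. fact (card {p\<in>S. G p = v}))"
      proof (rule prod.cong)
        fix v assume "v \<in> UNIV - {v0}"
        then have "{p\<in>insert p0 S. G p = v} = {p\<in>S. G p = v}" using v0_def by auto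
        then show "fact (card {p\<in>insert p0 S. G p = v}) = (fact (card {p\<in>S. G p = v}) :: nat)" by simp
      qed simp
      ultimately show ?thesis using cU cS by (simp add: algebra_simps)
    qed
    finally show ?thesis .
  qed
qed

lemma card_fibers:
  fixes \<gamma> :: "'e \<Rightarrow> 'v::finite"
  assumes "finite S"
  shows "(\<Sum>v\<in>UNIV. card {i\<in>S. \<gamma> i = v}) = card S"
proof -
  have "(\<Sum>v\<in>UNIV. \<Sum>i\<in>{i\<in>S. \<gamma> i = v}. (1::nat)) = (\<Sum>i\<in>S. 1)"
    by (rule sum.group[OF assms]) auto
  then show ?thesis by simp
qed

definition FS :: "'e set \<Rightarrow> ('v \<Rightarrow> nat) \<Rightarrow> ('e \<Rightarrow> 'v) set" where
  "FS S s = {\<gamma> \<in> S \<rightarrow>\<^sub>E UNIV. \<forall>v. card {i\<in>S. \<gamma> i = v} = s v}"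

lemma lemC:
  fixes s :: "'v::finite \<Rightarrow> nat" and S :: "'e set"
  shows "finite S \<Longrightarrow> card (FS S s) * (\<Prod>v\<in>UNIV. fact (s v)) \<le> fact (card S)"
proof (induction S arbitrary: s rule: finite_induct)
  case empty
  show ?case
  proof (cases "FS ({}::'e set) s = {}")
    case True then show ?thesis by simp
  next
    case False
    then obtain \<gamma> where "\<gamma> \<in> FS ({}::'e set) s" by blast
    then have s0: "s v = 0" for v unfolding FS_def by auto
    have "FS ({}::'e set) s \<subseteq> {\<lambda>_::'e. undefined::'v}" unfolding FS_def by auto
    hence "card (FS ({}::'e set) s) \<le> card {\<lambda>_::'e. undefined::'v}" by (intro card_mono) auto
    moreover have "(\<Prod>v\<in>UNIV. fact (s v) :: nat) = 1" using s0 by simp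
    ultimately show ?thesis by simp
  qed
next
  case (insert p0 S)
  have finFS: "finite (FS S s')" for s' :: "'v \<Rightarrow> nat"
    unfolding FS_def by (rule finite_subset[OF _ finite_PiE[OF insert.hyps(1)]]) auto
  show ?case
  proof (cases "FS (insert p0 S) s = {}")
    case True then show ?thesis by simp
  next
    case False
    then obtain \<gamma>0 where g0: "\<gamma>0 \<in> FS (insert p0 S) s" by auto
    have sums: "(\<Sum>v\<in>UNIV. s v) = Suc (card S)"
    proof -
      have "(\<Sum>v\<in>UNIV. s v) = (\<Sum>v\<in>UNIV. card {i\<in>insert p0 S. \<gamma>0 i = v})" using g0 unfolding FS_def by simp
      also have "\<dots> = card (insert p0 S)" by (rule card_fibers) (use insert.hyps in simp)
      finally show ?thesis using insert.hyps by simp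
    qed
    define sd where "sd v = s(v := s v - 1)" for v
    define V where "V = {v. s v > 0}"
    have "card (FS (insert p0 S) s) \<le> card (SIGMA v:V. FS S (sd v))"
    proof (rule card_inj_on_le[where f="\<lambda>\<gamma>. (\<gamma> p0, restrict \<gamma> S)"])
      show "finite (SIGMA v:V. FS S (sd v))" using finFS by auto
      show "inj_on (\<lambda>\<gamma>. (\<gamma> p0, restrict \<gamma> S)) (FS (insert p0 S) s)"
      proof (rule inj_onI)
        fix f1 f2 assume f1: "f1 \<in> FS (insert p0 S) s" and f2: "f2 \<in> FS (insert p0 S) s"
          and eq: "(f1 p0, restrict f1 S) = (f2 p0, restrict f2 S)"
        have "f1 \<in> insert p0 S \<rightarrow>\<^sub>E UNIV" "f2 \<in> insert p0 S \<rightarrow>\<^sub>E UNIV" using f1 f2 unfolding FS_def by auto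
        then show "f1 = f2"
        proof (intro extensionalityI[of _ "insert p0 S"])
          fix e assume "e \<in> insert p0 S"
          moreover have "restrict f1 S e = restrict f2 S e" using eq by simp
          ultimately show "f1 e = f2 e" using eq by (cases "e = p0") auto
        qed (auto simp: PiE_iff)
      qed
      have mem: "(\<gamma> p0, restrict \<gamma> S) \<in> (SIGMA v:V. FS S (sd v))" if g: "\<gamma> \<in> FS (insert p0 S) s" for \<gamma>
      proof -
        have gc: "card {i\<in>insert p0 S. \<gamma> i = w} = s w" for w using g unfolding FS_def by auto
        have split: "{i\<in>insert p0 S. \<gamma> i = w} = (if \<gamma> p0 = w then insert p0 {i\<in>S. \<gamma> i = w} else {i\<in>S. \<gamma> i = w})" for w
          by auto
        have cw: "card {i\<in>S. \<gamma> i = w} = sd (\<gamma> p0) w" for w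
          using gc[of w] split[of w] insert.hyps unfolding sd_def by (auto split: if_splits)
        have "s (\<gamma> p0) > 0" using gc[of "\<gamma> p0"] split[of "\<gamma> p0"] insert.hyps by simp
        moreover have "card {i\<in>S. restrict \<gamma> S i = w} = sd (\<gamma> p0) w" for w
        proof -
          have "{i\<in>S. restrict \<gamma> S i = w} = {i\<in>S. \<gamma> i = w}" by auto
          then show ?thesis using cw by simp
        qed
        ultimately show ?thesis unfolding V_def FS_def by auto
      qed
      show "(\<lambda>\<gamma>. (\<gamma> p0, restrict \<gamma> S)) ` FS (insert p0 S) s \<subseteq> (SIGMA v:V. FS S (sd v))"
        using mem by auto
    qed
    also have "\<dots> = (\<Sum>v\<in>V. card (FS S (sd v)))" using finFS by simp
    finally have c1: "card (FS (insert p0 S) s) \<le> (\<Sum>v\<in>V. card (FS S (sd v)))" .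
    have pf: "(\<Prod>w\<in>UNIV. fact (s w)) = s v * (\<Prod>w\<in>UNIV. fact (sd v w))" if "v \<in> V" for v :: 'v
    proof -
      have sv: "s v = Suc (s v - 1)" using that unfolding V_def by simp
      have "(\<Prod>w\<in>UNIV. fact (s w)) = fact (s v) * (\<Prod>w\<in>UNIV-{v}. fact (s w) :: nat)" by (simp add: prod.remove)
      moreover have "(\<Prod>w\<in>UNIV. fact (sd v w)) = fact (sd v v) * (\<Prod>w\<in>UNIV-{v}. fact (sd v w) :: nat)"
        by (simp add: prod.remove)
      moreover have "(\<Prod>w\<in>UNIV-{v}. fact (sd v w) :: nat) = (\<Prod>w\<in>UNIV-{v}. fact (s w))"
        by (rule prod.cong) (auto simp: sd_def)
      moreover have "sd v v = s v - 1" by (simp add: sd_def)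
      moreover have "fact (s v) = s v * (fact (s v - 1) :: nat)" using that unfolding V_def
        by (simp add: fact_reduce)
      ultimately show ?thesis by simp
    qed
    have "card (FS (insert p0 S) s) * (\<Prod>w\<in>UNIV. fact (s w)) \<le> (\<Sum>v\<in>V. card (FS S (sd v)) * (\<Prod>w\<in>UNIV. fact (s w)))"
      using mult_right_mono[OF c1, of "\<Prod>w\<in>UNIV. fact (s w)"] by (simp add: sum_distrib_right)
    also have "\<dots> = (\<Sum>v\<in>V. s v * (card (FS S (sd v)) * (\<Prod>w\<in>UNIV. fact (sd v w))))"
      by (rule sum.cong) (simp_all add: pf)
    also have "\<dots> \<le> (\<Sum>v\<in>V. s v * fact (card S))"
      by (rule sum_mono) (simp add: insert.IH)
    also have "\<dots> = (\<Sum>v\<in>UNIV. s v) * fact (card S)"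
      by (simp add: sum_distrib_right V_def) (rule sum.mono_neutral_left, auto)
    also have "\<dots> = fact (card (insert p0 S))" using sums insert.hyps by simp
    finally show ?thesis .
  qed
qed




lemma binom_prod:
  "fact (a+A) * fact (b+B) * fact (a+b) * fact (A+B) \<le> fact (a+b+A+B) * fact a * fact b * fact A * (fact B :: nat)"
proof -
  define X where "X = (a+A) choose a"
  define Y where "Y = (b+B) choose b"
  define Z where "Z = (a+A+(b+B)) choose (a+b)"
  have XY: "X * Y \<le> Z"
  proof -
    have "X * Y = ((a+A) choose a) * ((b+B) choose (a+b-a))" unfolding X_def Y_def by simp
    also have "\<dots> \<le> (\<Sum>k\<le>a+b. ((a+A) choose k) * ((b+B) choose (a+b-k)))"
      by (rule member_le_sum[where f="\<lambda>k. ((a+A) choose k) * ((b+B) choose (a+b-k))"]) auto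
    also have "\<dots> = Z" unfolding Z_def by (rule vandermonde)
    finally show ?thesis .
  qed
  have fX: "fact a * fact A * X = fact (a+A)" using binomial_fact_lemma[of a "a+A"] unfolding X_def by simp
  have fY: "fact b * fact B * Y = fact (b+B)" using binomial_fact_lemma[of b "b+B"] unfolding Y_def by simp
  have fZ: "fact (a+b) * fact (A+B) * Z = fact (a+b+A+B)"
  proof -
    have "a+A+(b+B) - (a+b) = A+B" "a+A+(b+B) = a+b+A+B" by simp_all
    then show ?thesis using binomial_fact_lemma[of "a+b" "a+A+(b+B)"] unfolding Z_def by (simp add: ac_simps)
  qed
  have "fact (a+A) * fact (b+B) * fact (a+b) * fact (A+B) = (fact a * fact A * fact b * fact B * fact (a+b) * fact (A+B)) * (X * Y)"
    unfolding fX[symmetric] fY[symmetric] by (simp add: algebra_simps)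
  also have "\<dots> \<le> (fact a * fact A * fact b * fact B * fact (a+b) * fact (A+B)) * Z"
    using XY by (rule mult_left_mono) simp
  also have "\<dots> = fact (a+b+A+B) * fact a * fact b * fact A * fact B"
    unfolding fZ[symmetric] by (simp add: algebra_simps)
  finally show ?thesis .
qed

lemma SM:
  fixes s s' :: "'v \<Rightarrow> nat"
  shows "finite V \<Longrightarrow> fact (sum s V) * fact (sum s' V) * (\<Prod>v\<in>V. fact (s v + s' v))
     \<le> fact (sum (\<lambda>v. s v + s' v) V) * (\<Prod>v\<in>V. fact (s v)) * (\<Prod>v\<in>V. fact (s' v) :: nat)"
proof (induction V rule: finite_induct)
  case empty then show ?case by simp
next
  case (insert w V)
  define a where "a = s w"
  define b where "b = s' w"
  define A where "A = sum s V"
  define B where "B = sum s' V"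
  define R where "R = (\<Prod>v\<in>V. fact (s v + s' v) :: nat)"
  define P where "P = (\<Prod>v\<in>V. fact (s v) :: nat)"
  define P' where "P' = (\<Prod>v\<in>V. fact (s' v) :: nat)"
  have IH: "fact A * fact B * R \<le> fact (A+B) * P * P'"
    using insert.IH unfolding A_def B_def R_def P_def P'_def by (simp add: sum.distrib)
  have bp: "fact (a+A) * fact (b+B) * fact (a+b) * fact (A+B) \<le> fact (a+b+A+B) * fact a * fact b * fact A * (fact B :: nat)"
    by (rule binom_prod)
  have "(fact (a+A) * fact (b+B) * (fact (a+b) * R)) * (fact (A+B) * fact A * fact B)
      = (fact (a+A) * fact (b+B) * fact (a+b) * fact (A+B)) * (fact A * fact B * R)" by (simp add: algebra_simps)
  also have "\<dots> \<le> (fact (a+b+A+B) * fact a * fact b * fact A * fact B) * (fact (A+B) * P * P')"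
    by (rule mult_mono[OF bp IH]) simp_all
  also have "\<dots> = (fact (a+b+A+B) * (fact a * P) * (fact b * P')) * (fact (A+B) * fact A * fact B)"
    by (simp add: algebra_simps)
  finally have "fact (a+A) * fact (b+B) * (fact (a+b) * R) \<le> fact (a+b+A+B) * (fact a * P) * (fact b * P')"
    by (rule mult_right_le_imp_le) simp
  then show ?case using insert.hyps
    unfolding a_def b_def A_def B_def R_def P_def P'_def by (simp add: sum.distrib algebra_simps)
qed

lemma Mm:
  fixes s :: "'v \<Rightarrow> nat"
  assumes "finite V"
  shows "fact (sum s V) ^ m * (\<Prod>v\<in>V. fact (m * s v)) \<le> (fact (m * sum s V) * (\<Prod>v\<in>V. fact (s v)) ^ m :: nat)"
proof (induction m)
  case 0 then show ?case by simp
next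
  case (Suc m)
  define n where "n = sum s V"
  define P where "P = (\<Prod>v\<in>V. fact (s v) :: nat)"
  have sm: "fact (sum s V) * fact (sum (\<lambda>v. m * s v) V) * (\<Prod>v\<in>V. fact (s v + m * s v))
     \<le> fact (sum (\<lambda>v. s v + m * s v) V) * (\<Prod>v\<in>V. fact (s v)) * (\<Prod>v\<in>V. fact (m * s v) :: nat)"
    by (rule SM[OF assms])
  have e1: "sum (\<lambda>v. m * s v) V = m * n" unfolding n_def by (simp add: sum_distrib_left)
  have e2: "sum (\<lambda>v. s v + m * s v) V = Suc m * n" unfolding n_def by (simp add: sum.distrib sum_distrib_left)
  have e3: "(\<Prod>v\<in>V. fact (s v + m * s v)) = (\<Prod>v\<in>V. fact (Suc m * s v) :: nat)" by simp
  have sm': "fact n * fact (m * n) * (\<Prod>v\<in>V. fact (Suc m * s v)) \<le> fact (Suc m * n) * P * (\<Prod>v\<in>V. fact (m * s v) :: nat)"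
    using sm unfolding e1 e2 e3 n_def[symmetric] P_def .
  have IH: "fact n ^ m * (\<Prod>v\<in>V. fact (m * s v)) \<le> fact (m * n) * P ^ m"
    using Suc.IH unfolding n_def P_def .
  have "(fact n ^ Suc m * (\<Prod>v\<in>V. fact (Suc m * s v))) * fact (m * n)
      = fact n ^ m * (fact n * fact (m * n) * (\<Prod>v\<in>V. fact (Suc m * s v)))" by (simp add: algebra_simps)
  also have "\<dots> \<le> fact n ^ m * (fact (Suc m * n) * P * (\<Prod>v\<in>V. fact (m * s v)))"
    by (rule mult_left_mono[OF sm']) simp
  also have "\<dots> = (fact n ^ m * (\<Prod>v\<in>V. fact (m * s v))) * (fact (Suc m * n) * P)" by (simp add: algebra_simps)
  also have "\<dots> \<le> (fact (m * n) * P ^ m) * (fact (Suc m * n) * P)"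
    by (rule mult_right_mono[OF IH]) simp
  also have "\<dots> = (fact (Suc m * n) * P ^ Suc m) * fact (m * n)" by (simp add: algebra_simps)
  finally have "fact n ^ Suc m * (\<Prod>v\<in>V. fact (Suc m * s v)) \<le> fact (Suc m * n) * P ^ Suc m"
    by (rule mult_right_le_imp_le) simp
  then show ?case unfolding n_def P_def .
qed

lemma fact_mult_le0: "1 \<le> a \<Longrightarrow> fact a * fact (Suc b) \<le> (fact (a + b) :: nat)"
proof (induction b)
  case 0 then show ?case by simp
next
  case (Suc b)
  have "fact a * fact (Suc (Suc b)) = Suc (Suc b) * (fact a * fact (Suc b) :: nat)" by (simp add: algebra_simps)
  also have "\<dots> \<le> Suc (Suc b) * fact (a + b)" using Suc by (intro mult_left_mono) simp_all
  also have "\<dots> \<le> Suc (a + b) * fact (a + b)" using Suc.prems by (intro mult_right_mono) auto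
  also have "\<dots> = fact (a + Suc b)" by simp
  finally show ?case .
qed

lemma fact_mult_le: "1 \<le> a \<Longrightarrow> 1 \<le> b \<Longrightarrow> fact a * fact b \<le> (fact (a + b - 1) :: nat)"
  using fact_mult_le0[of a "b - 1"] by simp

lemma prod_fact_supp:
  fixes s :: "'v \<Rightarrow> nat"
  shows "finite K \<Longrightarrow> K \<noteq> {} \<Longrightarrow> (\<forall>v\<in>K. 1 \<le> s v) \<Longrightarrow>
    (\<Prod>v\<in>K. fact (s v)) \<le> (fact (sum s K + 1 - card K) :: nat) \<and> card K \<le> sum s K"
proof (induction K rule: finite_ne_induct)
  case (singleton x) then show ?case by simp
next
  case (insert w K)
  have IH: "(\<Prod>v\<in>K. fact (s v)) \<le> (fact (sum s K + 1 - card K) :: nat)" "card K \<le> sum s K"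
    using insert.IH insert.prems by auto
  have sw: "1 \<le> s w" using insert.prems by simp
  have "(\<Prod>v\<in>insert w K. fact (s v)) = fact (s w) * (\<Prod>v\<in>K. fact (s v) :: nat)" using insert.hyps by simp
  also have "\<dots> \<le> fact (s w) * fact (sum s K + 1 - card K)" using IH(1) by simp
  also have "\<dots> \<le> fact (s w + (sum s K + 1 - card K) - 1)" by (rule fact_mult_le) (use sw IH(2) in auto)
  also have "s w + (sum s K + 1 - card K) - 1 = sum s (insert w K) + 1 - card (insert w K)"
    using insert.hyps IH(2) by simp
  finally show ?case using insert.hyps IH(2) sw by simp
qed

lemma fact_ff: "j \<le> n \<Longrightarrow> fact n = fact (n - j) * (\<Prod>i<j. n - i :: nat)"
proof (induction j)
  case 0 then show ?case by simp
next
  case (Suc j)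
  have "fact (n - j) = (n - j) * fact (n - Suc j)" using Suc.prems by (simp add: fact_reduce)
  then show ?case using Suc by (simp add: algebra_simps)
qed

lemma ffsq: "j < n \<Longrightarrow> n ^ j \<le> (\<Prod>i<j. n - i :: nat) ^ 2"
proof -
  assume jn: "j < n"
  have "(\<Prod>i<j. n - i :: nat) ^ 2 = (\<Prod>i<j. n - i) * (\<Prod>i<j. n - (j - Suc i))"
    using prod.nat_diff_reindex[where g="\<lambda>i. n - i" and n=j] by (simp add: power2_eq_square)
  also have "\<dots> = (\<Prod>i<j. (n - i) * (n - (j - Suc i)))" by (simp add: prod.distrib)
  also have "\<dots> \<ge> (\<Prod>i<j. n)"
  proof (rule prod_mono)
    fix i assume "i \<in> {..<j}"
    then have i: "i < j" by simp
    define x where "x = n - i"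
    define y where "y = n - (j - Suc i)"
    have "2 \<le> x" "2 \<le> y" "x + y \<ge> n" using i jn unfolding x_def y_def by auto
    moreover have "x * y \<ge> 2 * x" "x * y \<ge> 2 * y" using \<open>2 \<le> x\<close> \<open>2 \<le> y\<close> by simp_all
    ultimately have "x * y \<ge> n" by linarith
    then show "0 \<le> n \<and> n \<le> (n - i) * (n - (j - Suc i))" unfolding x_def y_def by simp
  qed
  finally show ?thesis by simp
qed




lemma divcnt:
  assumes "0 < m"
  shows "card {p\<in>{..<m*n}. P (p div m)} = m * card {i\<in>{..<n}. P i}"
proof -
  have "{p\<in>{..<m*n}. P (p div m)} = (\<lambda>(i,j). m*i+j) ` ({i\<in>{..<n}. P i} \<times> {..<m})"
  proof (rule set_eqI, rule iffI)
    fix p assume p: "p \<in> {p\<in>{..<m*n}. P (p div m)}"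
    have "p = m * (p div m) + p mod m" by simp
    moreover have "p div m < n" using p assms by (simp add: div_less_iff_less_mult mult.commute)
    moreover have "p mod m < m" using assms by simp
    ultimately show "p \<in> (\<lambda>(i,j). m*i+j) ` ({i\<in>{..<n}. P i} \<times> {..<m})" using p
      by (intro image_eqI[where x="(p div m, p mod m)"]) auto
  next
    fix p assume "p \<in> (\<lambda>(i,j). m*i+j) ` ({i\<in>{..<n}. P i} \<times> {..<m})"
    then obtain i j where ij: "p = m*i+j" "i < n" "P i" "j < m" by auto
    have "(m*i+j) div m = i" using ij assms by simp
    moreover have "m*i+j < m*n"
    proof -
      have "m*i+j < m*(i+1)" using ij by simp
      also have "\<dots> \<le> m*n" using ij by (intro mult_left_mono) auto
      finally show ?thesis .
    qed
    ultimately show "p \<in> {p\<in>{..<m*n}. P (p div m)}" using ij by simp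
  qed
  moreover have "inj_on (\<lambda>(i,j). m*i+j) ({i\<in>{..<n}. P i} \<times> {..<m})"
  proof (rule inj_onI, clarify)
    fix i j i' j' assume h: "j < m" "j' < m" "m*i+j = m*i'+j'"
    have d: "(m*i+j) div m = i" "(m*i'+j') div m = i'" using h(1,2) assms by simp_all
    have "i = i'" using d h(3) by metis
    then show "i = i' \<and> j = j'" using h(3) by simp
  qed
  ultimately show ?thesis by (simp add: card_image card_cartesian_product)
qed

lemma perm_transfer:
  assumes "\<pi> permutes S" "finite S"
  shows "card {u\<in>S. Q (inv \<pi> u)} = card {p\<in>S. Q p}"
proof -
  have "{u\<in>S. Q (inv \<pi> u)} = \<pi> ` {p\<in>S. Q p}"
  proof (rule set_eqI, rule iffI)
    fix u assume "u \<in> {u\<in>S. Q (inv \<pi> u)}"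
    then show "u \<in> \<pi> ` {p\<in>S. Q p}"
      using assms(1) by (intro image_eqI[where x="inv \<pi> u"])
        (auto simp: permutes_inverses permutes_in_image permutes_inv)
  next
    fix u assume "u \<in> \<pi> ` {p\<in>S. Q p}"
    then show "u \<in> {u\<in>S. Q (inv \<pi> u)}"
      using assms(1) by (auto simp: permutes_inverses permutes_in_image)
  qed
  moreover have "inj_on \<pi> {p\<in>S. Q p}" using assms(1) permutes_inj by (metis inj_on_subset subset_UNIV)
  ultimately show ?thesis by (simp add: card_image)
qed

lemma Yeq:
  fixes m n :: nat
  assumes "\<pi> permutes {..<m*n}" "i < n"
  shows "(\<Sum>j<m. t (\<pi> (m*i + j))) = (\<Sum>u\<in>{u\<in>{..<m*n}. inv \<pi> u div m = i}. t u)"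
proof (cases "m = 0")
  case True then show ?thesis by simp
next
  case False
  have "{u\<in>{..<m*n}. inv \<pi> u div m = i} = (\<lambda>j. \<pi> (m*i+j)) ` {..<m}"
  proof (rule set_eqI, rule iffI)
    fix u assume u: "u \<in> {u\<in>{..<m*n}. inv \<pi> u div m = i}"
    define p where "p = inv \<pi> u"
    have pu: "\<pi> p = u" unfolding p_def using assms(1) by (simp add: permutes_inverses)
    have pdiv: "p div m = i" using u unfolding p_def by simp
    have "p = m * (p div m) + p mod m" by simp
    then have pe: "p = m * i + p mod m" using pdiv by simp
    have "p mod m < m" using False by simp
    moreover have "u = \<pi> (m*i + p mod m)" using pe pu by simp
    ultimately show "u \<in> (\<lambda>j. \<pi> (m*i+j)) ` {..<m}" by blast
  next
    fix u assume "u \<in> (\<lambda>j. \<pi> (m*i+j)) ` {..<m}"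
    then obtain j where j: "j < m" "u = \<pi> (m*i+j)" by auto
    have lt: "m*i+j < m*n"
    proof -
      have "m*i+j < m*(i+1)" using j by simp
      also have "\<dots> \<le> m*n" using assms by (intro mult_left_mono) auto
      finally show ?thesis .
    qed
    have "inv \<pi> u = m*i+j" using j assms(1) by (simp add: permutes_inverses)
    moreover have "u < m*n" using lt j(2) permutes_in_image[OF assms(1), of "m*i+j"] by simp
    ultimately show "u \<in> {u\<in>{..<m*n}. inv \<pi> u div m = i}" using j by simp
  qed
  moreover have "inj_on (\<lambda>j. \<pi> (m*i+j)) {..<m}"
  proof (rule inj_onI)
    fix x y assume "\<pi> (m*i+x) = \<pi> (m*i+y)"
    then have "m*i+x = m*i+y" using permutes_inj[OF assms(1)] by (simp add: inj_eq)
    then show "x = y" by simp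
  qed
  ultimately show ?thesis by (simp add: sum.reindex)
qed

lemma card_vecs_sum:
  assumes "1 \<le> N"
  shows "CARD('a::{field,finite}) ^ (N - 1) \<le> card (vecs_sum N (a::'a))"
proof -
  define f where "f u = u(N - 1 := a - (\<Sum>j<N-1. u j))" for u :: "nat \<Rightarrow> 'a"
  have "card ({..<N-1} \<rightarrow>\<^sub>E (UNIV::'a set)) \<le> card (vecs_sum N a)"
  proof (rule card_inj_on_le[where f=f])
    show "finite (vecs_sum N a)" unfolding vecs_sum_def
      by (rule finite_subset[OF _ finite_PiE[of "{0..<N}" "\<lambda>_. UNIV::'a set"]]) auto
    show "inj_on f ({..<N-1} \<rightarrow>\<^sub>E UNIV)"
    proof (rule inj_onI)
      fix u v assume u: "u \<in> {..<N-1} \<rightarrow>\<^sub>E (UNIV::'a set)" and v: "v \<in> {..<N-1} \<rightarrow>\<^sub>E (UNIV::'a set)" and "f u = f v"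
      then have "\<forall>j. j \<noteq> N - 1 \<longrightarrow> u j = v j" unfolding f_def by (metis fun_upd_other)
      moreover have "u (N-1) = v (N-1)" using u v by (auto simp: PiE_iff extensional_def)
      ultimately show "u = v" by (metis ext)
    qed
    show "f ` ({..<N-1} \<rightarrow>\<^sub>E UNIV) \<subseteq> vecs_sum N a"
    proof
      fix w assume "w \<in> f ` ({..<N-1} \<rightarrow>\<^sub>E UNIV)"
      then obtain u where u: "u \<in> {..<N-1} \<rightarrow>\<^sub>E (UNIV::'a set)" and w: "w = f u" by auto
      have ext: "w \<in> {0..<N} \<rightarrow>\<^sub>E UNIV" using u assms unfolding w f_def by (auto simp: PiE_iff extensional_def)
      have "{..<N} = insert (N-1) {..<N-1}" using assms by auto
      then have "(\<Sum>j<N. w j) = w (N-1) + (\<Sum>j<N-1. w j)" by simp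
      also have "(\<Sum>j<N-1. w j) = (\<Sum>j<N-1. u j)" unfolding w f_def by (rule sum.cong) auto
      finally have "(\<Sum>j<N. w j) = a" unfolding w f_def by simp
      then show "w \<in> vecs_sum N a" using ext unfolding vecs_sum_def by simp
    qed
  qed
  then show ?thesis by (simp add: card_funcsetE)
qed

lemma group_recip:
  fixes f :: "'x \<Rightarrow> 'z" and h :: "'z \<Rightarrow> real"
  assumes "finite A"
  shows "(\<Sum>x\<in>A. h (f x) / card {y\<in>A. f y = f x}) = (\<Sum>z\<in>f ` A. h z)"
proof -
  have "(\<Sum>x\<in>A. h (f x) / card {y\<in>A. f y = f x}) = (\<Sum>z\<in>f ` A. \<Sum>x\<in>{x\<in>A. f x = z}. h (f x) / card {y\<in>A. f y = f x})"
    by (rule sum.group[symmetric]) (use assms in auto)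
  also have "\<dots> = (\<Sum>z\<in>f ` A. \<Sum>x\<in>{x\<in>A. f x = z}. h z / card {y\<in>A. f y = z})"
    by (rule sum.cong, simp, rule sum.cong) auto
  also have "\<dots> = (\<Sum>z\<in>f ` A. h z)"
  proof (rule sum.cong)
    fix z assume "z \<in> f ` A"
    then have "card {y\<in>A. f y = z} > 0" using assms by (auto simp: card_gt_0_iff)
    then show "(\<Sum>x\<in>{x\<in>A. f x = z}. h z / card {y\<in>A. f y = z}) = h z" by simp
  qed simp
  finally show ?thesis .
qed

lemma count_supp:
  fixes S :: "('v::finite \<Rightarrow> nat) set"
  assumes "\<forall>s\<in>S. sum s UNIV = n" "1 \<le> k"
  shows "card {s\<in>S. card {v. s v \<noteq> 0} = k} \<le> (CARD('v) choose k) * n ^ (k - 1)"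
proof -
  define ch where "ch K = (SOME v. v \<in> K)" for K :: "'v set"
  define g where "g s = ({v. s v \<noteq> 0}, restrict s ({v. s v \<noteq> 0} - {ch {v. s v \<noteq> 0}}))" for s :: "'v \<Rightarrow> nat"
  define Tg where "Tg = (SIGMA K:{K. K \<subseteq> (UNIV::'v set) \<and> card K = k}. (K - {ch K}) \<rightarrow>\<^sub>E {1..n})"
  have "card {s\<in>S. card {v. s v \<noteq> 0} = k} \<le> card Tg"
  proof (rule card_inj_on_le[where f=g])
    show "finite Tg" unfolding Tg_def by (intro finite_SigmaI finite_PiE) auto
    show "inj_on g {s\<in>S. card {v. s v \<noteq> 0} = k}"
    proof (rule inj_onI)
      fix s1 s2 assume s1: "s1 \<in> {s\<in>S. card {v. s v \<noteq> 0} = k}" and s2: "s2 \<in> {s\<in>S. card {v. s v \<noteq> 0} = k}"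
        and eq: "g s1 = g s2"
      define K where "K = {v. s1 v \<noteq> 0}"
      have K2: "{v. s2 v \<noteq> 0} = K" using eq unfolding g_def K_def by simp
      have "1 \<le> card K" using s1 assms(2) unfolding K_def by simp
      then have Kne: "K \<noteq> {}" by (cases "K = {}") auto
      define c where "c = ch K"
      have cK: "c \<in> K" unfolding c_def ch_def using Kne by (simp add: some_in_eq)
      have "snd (g s1) = snd (g s2)" using eq by simp
      then have "restrict s1 ({v. s1 v \<noteq> 0} - {ch {v. s1 v \<noteq> 0}}) = restrict s2 ({v. s2 v \<noteq> 0} - {ch {v. s2 v \<noteq> 0}})"
        unfolding g_def snd_conv .
      then have r: "restrict s1 (K - {c}) = restrict s2 (K - {c})" unfolding K2 K_def[symmetric] c_def[symmetric] .
      have oth: "s1 v = s2 v" if "v \<noteq> c" for v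
      proof (cases "v \<in> K")
        case True then show ?thesis using fun_cong[OF r, of v] that by simp
      next
        case False
        then have "v \<notin> {v. s2 v \<noteq> 0}" using K2 by simp
        then show ?thesis using False unfolding K_def by simp
      qed
      have "sum s1 UNIV = s1 c + sum s1 (UNIV - {c})" by (simp add: sum.remove)
      moreover have "sum s2 UNIV = s2 c + sum s2 (UNIV - {c})" by (simp add: sum.remove)
      moreover have "sum s1 (UNIV - {c}) = sum s2 (UNIV - {c})" by (rule sum.cong) (auto intro: oth)
      moreover have "sum s1 UNIV = n" "sum s2 UNIV = n" using s1 s2 assms(1) by auto
      ultimately have "s1 c = s2 c" by simp
      show "s1 = s2"
      proof (rule ext)
        fix v show "s1 v = s2 v" by (cases "v = c") (use oth \<open>s1 c = s2 c\<close> in auto)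
      qed
    qed
    show "g ` {s\<in>S. card {v. s v \<noteq> 0} = k} \<subseteq> Tg"
    proof
      fix w assume "w \<in> g ` {s\<in>S. card {v. s v \<noteq> 0} = k}"
      then obtain s where s: "s \<in> S" "card {v. s v \<noteq> 0} = k" and w: "w = g s" by auto
      have le: "s v \<le> n" for v
      proof -
        have "s v \<le> sum s UNIV" by (rule member_le_sum) auto
        then show ?thesis using s assms(1) by simp
      qed
      show "w \<in> Tg" unfolding w g_def Tg_def using s le
        by (auto simp: PiE_iff Suc_le_eq)
    qed
  qed
  also have "card Tg = (\<Sum>K\<in>{K. K \<subseteq> (UNIV::'v set) \<and> card K = k}. card ((K - {ch K}) \<rightarrow>\<^sub>E {1..n}))"
    unfolding Tg_def by (intro card_SigmaI) (auto intro!: finite_PiE)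
  also have "\<dots> = (\<Sum>K\<in>{K. K \<subseteq> (UNIV::'v set) \<and> card K = k}. n ^ (k - 1))"
  proof (rule sum.cong)
    fix K assume K: "K \<in> {K. K \<subseteq> (UNIV::'v set) \<and> card K = k}"
    then have "K \<noteq> {}" using assms(2) by auto
    then have "ch K \<in> K" unfolding ch_def by (simp add: some_in_eq)
    then have "card (K - {ch K}) = k - 1" using K by simp
    then show "card ((K - {ch K}) \<rightarrow>\<^sub>E {1..n}) = n ^ (k - 1)" by (simp add: card_funcsetE)
  qed simp
  also have "\<dots> = (CARD('v) choose k) * n ^ (k - 1)" using n_subsets[of "UNIV::'v set" k] by simp
  finally show ?thesis .
qed




lemma term_bound:
  fixes n m k :: nat and D Q c :: real
  assumes n1: "1 \<le> n" and m3: "3 \<le> m" and k1: "1 \<le> k" and kn: "k \<le> n"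
    and D0: "0 \<le> D" and Q0: "0 < Q" and DQ: "D * Q \<le> fact n"
    and c0: "0 \<le> c" and cQ: "c \<le> (Q / fact n) ^ m"
    and Qf: "Q \<le> fact (n + 1 - k)"
  shows "D^2 * c \<le> (real n ^ 2 / (real n / 2) ^ (m - 2)) powr (real (k - 1) / 2) / real n ^ (k - 1)"
proof -
  define j where "j = k - 1"
  define M where "M = fact n / Q"
  define F where "F = real (\<Prod>i<j. n - i)"
  define r where "r = real n ^ 2 / (real n / 2) ^ (m - 2)"
  have Mpos: "M > 0" unfolding M_def using Q0 by simp
  have DM: "D \<le> M" unfolding M_def using DQ Q0 by (simp add: field_simps)
  have cM: "c \<le> (1 / M) ^ m" unfolding M_def using cQ by simp
  have "D^2 * c \<le> M^2 * (1/M)^m"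
    by (intro mult_mono power_mono DM cM) (use D0 Mpos c0 in auto)
  also have "\<dots> = 1 / M ^ (m - 2)"
  proof -
    have "m = (m - 2) + 2" using m3 by simp
    then have "M ^ m = M ^ (m - 2) * M^2" by (metis power_add)
    then show ?thesis using Mpos by (simp add: power_one_over field_simps)
  qed
  finally have t1: "D^2 * c \<le> 1 / M ^ (m - 2)" .
  have jn: "j < n" "j \<le> n" using k1 kn unfolding j_def by auto
  have ff: "fact n = fact (n - j) * (\<Prod>i<j. n - i :: nat)" by (rule fact_ff[OF jn(2)])
  have nj: "n - j = n + 1 - k" using k1 kn unfolding j_def by simp
  have Fpos: "F > 0" unfolding F_def using jn by (auto intro!: prod_pos)
  have "(fact n :: real) = fact (n + 1 - k) * F" unfolding F_def
    using arg_cong[OF ff, of real] nj by (simp add: of_nat_fact)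
  then have FM: "F \<le> M" unfolding M_def using Qf Q0 Fpos
    by (simp add: field_simps)
  have F2: "real n ^ j \<le> F ^ 2"
  proof -
    have "n ^ j \<le> (\<Prod>i<j. n - i :: nat) ^ 2" by (rule ffsq[OF jn(1)])
    then show ?thesis unfolding F_def by (metis of_nat_le_iff of_nat_power)
  qed
  have t2: "1 / M ^ (m - 2) \<le> 1 / F ^ (m - 2)"
    by (intro divide_left_mono power_mono FM) (use Fpos Mpos in auto)
  have npos: "real n > 0" using n1 by simp
  have rpos: "r > 0" unfolding r_def using npos by simp
  have sq: "(real n ^ j / F ^ (m - 2))^2 \<le> r ^ j"
  proof -
    have "(real n ^ j / F ^ (m - 2))^2 = real n ^ (2*j) / (F^2) ^ (m - 2)"
      by (simp add: power_divide power_mult power_mult_distrib mult.commute flip: power_mult)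
    also have "\<dots> \<le> real n ^ (2*j) / (real n ^ j) ^ (m - 2)"
      by (intro divide_left_mono power_mono F2) (use npos Fpos in auto)
    also have "\<dots> \<le> real n ^ (2*j) / ((real n / 2) ^ j) ^ (m - 2)"
      by (intro divide_left_mono power_mono) (use npos in auto)
    also have "\<dots> = r ^ j"
    proof -
      have h1: "(real n ^ 2)^j = real n^(2*j)" by (simp add: power_mult)
      have h2: "((real n/2)^(m-2))^j = ((real n/2)^j)^(m-2)" by (simp add: power_mult[symmetric] mult.commute)
      have eq: "r^j = (real n ^ 2)^j / ((real n/2)^(m-2))^j" unfolding r_def by (rule power_divide)
      show ?thesis by (simp only: eq h1 h2)
    qed
    finally show ?thesis .
  qed
  have "real n ^ j / F ^ (m - 2) \<le> sqrt (r ^ j)"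
    by (rule real_le_rsqrt[OF sq])
  also have "sqrt (r ^ j) = r powr (real j / 2)"
    using rpos by (simp add: powr_half_sqrt[symmetric] powr_realpow[symmetric] powr_powr)
  finally have t3: "real n ^ j / F ^ (m - 2) \<le> r powr (real j / 2)" .
  have "1 / F ^ (m - 2) \<le> r powr (real j / 2) / real n ^ j"
    using t3 npos Fpos by (simp add: field_simps)
  with t1 t2 have "D^2 * c \<le> r powr (real j / 2) / real n ^ j" by linarith
  then show ?thesis unfolding r_def j_def using k1 by (simp add: of_nat_diff)
qed




lemma perms_iff: "\<pi> \<in> perms N \<longleftrightarrow> \<pi> permutes {..<N}"
  unfolding perms_def by (simp add: atLeast0LessThan)

lemma count_perms_bound:
  fixes \<alpha> \<gamma> :: "nat \<Rightarrow> 'a::{field,finite}" and m n :: nat and \<pi> :: "nat \<Rightarrow> nat"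
  assumes m0: "0 < m" and \<pi>P: "\<pi> permutes {..<m*n}"
  shows "real (card {\<pi>'\<in>perms (m*n). \<forall>u<m*n. \<alpha> (inv \<pi> u div m) = \<gamma> (inv \<pi>' u div m)})
     \<le> (if (\<lambda>v. card {i\<in>{..<n}. \<alpha> i = v}) = (\<lambda>v. card {i\<in>{..<n}. \<gamma> i = v})
         then real (\<Prod>v\<in>UNIV. fact (m * card {i\<in>{..<n}. \<gamma> i = v})) else 0)"
proof -
  define N where "N = m*n"
  define Fa where "Fa u = \<alpha> (inv \<pi> u div m)" for u
  define G where "G p = \<gamma> (p div m)" for p
  define Z where "Z = {\<pi>'\<in>perms N. \<forall>u<N. \<alpha> (inv \<pi> u div m) = \<gamma> (inv \<pi>' u div m)}"
  have memZ: "restrict \<pi>' {..<N} \<in> BL {..<N} {..<N} Fa G" if "\<pi>' \<in> Z" for \<pi>'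
  proof -
    have pp: "\<pi>' permutes {..<N}" and cd: "\<forall>u<N. \<alpha> (inv \<pi> u div m) = \<gamma> (inv \<pi>' u div m)"
      using that unfolding Z_def perms_iff by auto
    have bij: "bij_betw \<pi>' {..<N} {..<N}" by (rule permutes_imp_bij[OF pp])
    have "bij_betw (restrict \<pi>' {..<N}) {..<N} {..<N}"
      using bij by (rule bij_betw_cong[THEN iffD1, rotated]) simp
    moreover have "restrict \<pi>' {..<N} \<in> {..<N} \<rightarrow>\<^sub>E {..<N}" using bij by (auto simp: bij_betw_def)
    moreover have "Fa (restrict \<pi>' {..<N} p) = G p" if "p \<in> {..<N}" for p
    proof -
      have "\<pi>' p < N" using that permutes_in_image[OF pp] by simp
      then have "\<alpha> (inv \<pi> (\<pi>' p) div m) = \<gamma> (inv \<pi>' (\<pi>' p) div m)" using cd by simp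
      then show ?thesis using that unfolding Fa_def G_def by (simp add: permutes_inverses[OF pp])
    qed
    ultimately show ?thesis unfolding BL_def by auto
  qed
  have injZ: "inj_on (\<lambda>\<pi>'. restrict \<pi>' {..<N}) Z"
  proof (rule inj_onI)
    fix p1 p2 assume "p1 \<in> Z" "p2 \<in> Z" and eq: "restrict p1 {..<N} = restrict p2 {..<N}"
    then have pp: "p1 permutes {..<N}" "p2 permutes {..<N}" unfolding Z_def perms_iff by auto
    show "p1 = p2"
    proof (rule ext)
      fix u show "p1 u = p2 u"
      proof (cases "u < N")
        case True then show ?thesis using fun_cong[OF eq, of u] by simp
      next
        case False then show ?thesis using permutes_not_in[OF pp(1)] permutes_not_in[OF pp(2)] by simp
      qed
    qed
  qed
  have finBL: "finite (BL {..<N} {..<N} Fa G)" unfolding BL_def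
    by (rule finite_subset[OF _ finite_PiE[of "{..<N}" "\<lambda>_. {..<N}"]]) auto
  have cZ: "card {\<pi>'\<in>perms (m*n). \<forall>u<m*n. \<alpha> (inv \<pi> u div m) = \<gamma> (inv \<pi>' u div m)} = card Z"
    unfolding Z_def N_def by simp
  have c1: "card Z \<le> card (BL {..<N} {..<N} Fa G)"
    by (rule card_inj_on_le[OF injZ _ finBL]) (use memZ in auto)
  have c2: "card (BL {..<N} {..<N} Fa G) \<le> (\<Prod>v\<in>UNIV. fact (card {p\<in>{..<N}. G p = v}))"
    by (rule lemB) auto
  have Gc: "card {p\<in>{..<N}. G p = v} = m * card {i\<in>{..<n}. \<gamma> i = v}" for v
    unfolding G_def N_def by (rule divcnt[OF m0])
  have Fc: "card {u\<in>{..<N}. Fa u = v} = m * card {i\<in>{..<n}. \<alpha> i = v}" for v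
  proof -
    have "card {u\<in>{..<N}. Fa u = v} = card {p\<in>{..<N}. \<alpha> (p div m) = v}"
      unfolding Fa_def by (rule perm_transfer[where Q="\<lambda>p. \<alpha> (p div m) = v"]) (use \<pi>P N_def in auto)
    also have "\<dots> = m * card {i\<in>{..<n}. \<alpha> i = v}" unfolding N_def by (rule divcnt[OF m0])
    finally show ?thesis .
  qed
  show ?thesis
  proof (cases "Z = {}")
    case True then show ?thesis unfolding cZ by (auto intro!: prod_nonneg)
  next
    case False
    then obtain p0 where "p0 \<in> Z" by auto
    then have "restrict p0 {..<N} \<in> BL {..<N} {..<N} Fa G" by (rule memZ)
    then have "card {u\<in>{..<N}. Fa u = v} = card {p\<in>{..<N}. G p = v}" for v
      unfolding BL_def by (intro bij_fiber_card) auto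
    then have "m * card {i\<in>{..<n}. \<alpha> i = v} = m * card {i\<in>{..<n}. \<gamma> i = v}" for v using Fc Gc by simp
    then have eqc: "(\<lambda>v. card {i\<in>{..<n}. \<alpha> i = v}) = (\<lambda>v. card {i\<in>{..<n}. \<gamma> i = v})" using m0 by auto
    have "card Z \<le> (\<Prod>v\<in>UNIV. fact (m * card {i\<in>{..<n}. \<gamma> i = v}))" using c1 c2 Gc by simp
    then have hh: "real (card Z) \<le> real (\<Prod>v\<in>UNIV. fact (m * card {i\<in>{..<n}. \<gamma> i = v}))"
      by (simp only: of_nat_le_iff)
    show ?thesis unfolding if_P[OF eqc] cZ by (rule hh)
  qed
qed




lemma s_bound:
  fixes \<alpha> :: "nat \<Rightarrow> 'a::{field,finite}" and m n :: nat
  assumes n1: "1 \<le> n" and m3: "3 \<le> m"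
  defines "s \<equiv> (\<lambda>v. card {i\<in>{..<n}. \<alpha> i = v})"
  shows "real (card (FS {..<n} s))^2 * (real (\<Prod>v\<in>UNIV. fact (m * s v)) / fact (m*n))
     \<le> (real n ^ 2 / (real n / 2) ^ (m - 2)) powr (real (card {v. s v \<noteq> 0} - 1) / 2) / real n ^ (card {v. s v \<noteq> 0} - 1)
       \<and> 1 \<le> card {v. s v \<noteq> 0} \<and> sum s UNIV = n"
proof -
  define K where "K = {v. s v \<noteq> 0}"
  define Q where "Q = (\<Prod>v\<in>UNIV. fact (s v) :: nat)"
  have sumn: "sum s UNIV = n" unfolding s_def using card_fibers[of "{..<n}" \<alpha>] by simp
  have sumK: "sum s K = n" unfolding sumn[symmetric] K_def by (rule sum.mono_neutral_left) auto
  have QK: "Q = (\<Prod>v\<in>K. fact (s v))" unfolding Q_def K_def by (rule prod.mono_neutral_right) auto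
  have Kne: "K \<noteq> {}" using sumK n1 by auto
  have pfs: "(\<Prod>v\<in>K. fact (s v)) \<le> (fact (sum s K + 1 - card K) :: nat) \<and> card K \<le> sum s K"
    by (rule prod_fact_supp) (use Kne in \<open>auto simp: K_def\<close>)
  have k1: "1 \<le> card K" using Kne by (simp add: Suc_le_eq card_gt_0_iff)
  have kn: "card K \<le> n" using pfs sumK by simp
  have Qf: "real Q \<le> fact (n + 1 - card K)" using pfs sumK QK by (metis of_nat_fact of_nat_le_iff)
  have Q0: "0 < real Q" unfolding Q_def by (simp add: prod_pos)
  have DQ: "card (FS {..<n} s) * Q \<le> fact n" unfolding Q_def using lemC[of "{..<n}" s] by simp
  have DQr: "real (card (FS {..<n} s)) * real Q \<le> fact n" using DQ by (metis of_nat_fact of_nat_le_iff of_nat_mult)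
  have Mm': "fact n ^ m * (\<Prod>v\<in>UNIV. fact (m * s v)) \<le> fact (m * n) * Q ^ m"
    using Mm[of UNIV s m] sumn unfolding Q_def by simp
  have cQ: "real (\<Prod>v\<in>UNIV. fact (m * s v)) / fact (m*n) \<le> (real Q / fact n) ^ m"
  proof -
    have "real (fact n ^ m * (\<Prod>v\<in>UNIV. fact (m * s v))) \<le> real (fact (m * n) * Q ^ m)"
      using Mm' by (simp only: of_nat_le_iff)
    then have "fact n ^ m * real (\<Prod>v\<in>UNIV. fact (m * s v)) \<le> fact (m * n) * real Q ^ m"
      by (simp only: of_nat_mult of_nat_power of_nat_fact)
    then show ?thesis by (simp add: field_simps power_divide)
  qed
  have "real (card (FS {..<n} s))^2 * (real (\<Prod>v\<in>UNIV. fact (m * s v)) / fact (m*n))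
     \<le> (real n ^ 2 / (real n / 2) ^ (m - 2)) powr (real (card K - 1) / 2) / real n ^ (card K - 1)"
    by (rule term_bound[OF n1 m3 k1 kn _ Q0 DQr _ cQ Qf]) (auto intro!: divide_nonneg_nonneg prod_nonneg)
  then show ?thesis using k1 sumn unfolding K_def by simp
qed

lemma sum_over_s:
  fixes S :: "('v::finite \<Rightarrow> nat) set" and g :: "nat \<Rightarrow> real"
  assumes "finite S" "\<forall>s\<in>S. sum s UNIV = n" "\<forall>s\<in>S. 1 \<le> card {v. s v \<noteq> 0}" "\<forall>k. 0 \<le> g k"
  shows "(\<Sum>s\<in>S. g (card {v. s v \<noteq> 0})) \<le> (\<Sum>k\<in>{1..CARD('v)}. real ((CARD('v) choose k) * n ^ (k - 1)) * g k)"
proof -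
  have "(\<Sum>s\<in>S. g (card {v. s v \<noteq> 0})) = (\<Sum>k\<in>{1..CARD('v)}. \<Sum>s\<in>{s\<in>S. card {v. s v \<noteq> 0} = k}. g (card {v. s v \<noteq> 0}))"
  proof (rule sum.group[symmetric])
    show "finite S" by (rule assms(1))
    show "finite {1..CARD('v)}" by simp
    show "(\<lambda>s. card {v. s v \<noteq> 0}) ` S \<subseteq> {1..CARD('v)}"
    proof
      fix k assume "k \<in> (\<lambda>s. card {v. s v \<noteq> 0}) ` S"
      then obtain s where "s \<in> S" "k = card {v. s v \<noteq> 0}" by auto
      moreover have "card {v. s v \<noteq> 0} \<le> CARD('v)" by (rule card_mono) auto
      ultimately show "k \<in> {1..CARD('v)}" using assms(3) by auto
    qed
  qed
  also have "\<dots> = (\<Sum>k\<in>{1..CARD('v)}. real (card {s\<in>S. card {v. s v \<noteq> 0} = k}) * g k)"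
    by (rule sum.cong) simp_all
  also have "\<dots> \<le> (\<Sum>k\<in>{1..CARD('v)}. real ((CARD('v) choose k) * n ^ (k - 1)) * g k)"
  proof (rule sum_mono)
    fix k assume "k \<in> {1..CARD('v)}"
    then have "card {s\<in>S. card {v. s v \<noteq> 0} = k} \<le> (CARD('v) choose k) * n ^ (k - 1)"
      using count_supp[OF assms(2)] by simp
    then have "real (card {s\<in>S. card {v. s v \<noteq> 0} = k}) \<le> real ((CARD('v) choose k) * n ^ (k - 1))"
      by (simp only: of_nat_le_iff)
    then show "real (card {s\<in>S. card {v. s v \<noteq> 0} = k}) * g k \<le> real ((CARD('v) choose k) * n ^ (k - 1)) * g k"
      by (rule mult_right_mono) (use assms(4) in auto)
  qed
  finally show ?thesis .
qed




lemma sum_indicator_card: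
  assumes "finite A"
  shows "(\<Sum>x\<in>A. if Q x then (1::real) else 0) = real (card {x\<in>A. Q x})"
  using sum.inter_filter[OF assms, of "\<lambda>_. (1::real)" Q] by simp

theorem mainTheorem4:
  fixes x :: "nat \<Rightarrow> 'a::{field,finite}" and m n :: nat
  assumes "n \<ge> 1" and "m \<ge> 3"
  shows "ennreal (second_moment m n x) \<le>
    (\<Sum>k. ennreal (real CARD('a) ^ (k+1) / real CARD('a) ^ (2*n - 1) *
        (real n ^ 2 / (real n / 2) ^ (m - 2)) powr (real k / 2)))"
proof -
  note n1 = assms(1) and m3 = assms(2)
  define q where "q = CARD('a)"
  define N where "N = m*n"
  define a0 where "a0 = (\<Sum>i<n. x i)"
  define P where "P = perms N"
  define T where "T = vecs_sum N a0"
  define aa where "aa \<pi> u = inv \<pi> u div m" for \<pi> :: "nat \<Rightarrow> nat" and u :: nat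
  define Fn where "Fn = {..<n} \<rightarrow>\<^sub>E (UNIV::'a set)"
  define cnt where "cnt \<alpha> = (\<lambda>v. card {i\<in>{..<n}. \<alpha> i = v})" for \<alpha> :: "nat \<Rightarrow> 'a"
  define r where "r = real n ^ 2 / (real n / 2) ^ (m - 2)"
  define SS where "SS = (\<Sum>\<pi>\<in>P. \<Sum>\<pi>'\<in>P. \<Sum>t\<in>T. Y m n x t \<pi> * Y m n x t \<pi>')"
  define Bf where "Bf \<alpha> \<gamma> = (if cnt \<alpha> = cnt \<gamma> then real (\<Prod>v\<in>UNIV. fact (m * cnt \<gamma> v)) else 0)"
    for \<alpha> \<gamma> :: "nat \<Rightarrow> 'a"
  define Cd where "Cd l \<pi> \<pi>' = (\<forall>u<N. fst l (aa \<pi> u) = snd l (aa \<pi>' u))"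
    for l :: "(nat \<Rightarrow> 'a) \<times> (nat \<Rightarrow> 'a)" and \<pi> \<pi>' :: "nat \<Rightarrow> nat"
  define Ds where "Ds s = real (card (FS {..<n} s :: (nat \<Rightarrow> 'a) set))" for s :: "'a \<Rightarrow> nat"
  define cs where "cs s = real (\<Prod>v\<in>UNIV. fact (m * s v)) / fact N" for s :: "'a \<Rightarrow> nat"
  define g where "g k = r powr (real (k - 1) / 2) / real n ^ (k - 1)" for k :: nat
  have m0: "0 < m" using m3 by simp
  have N1: "1 \<le> N" unfolding N_def using m3 n1 by simp
  have qpos: "0 < q" unfolding q_def by simp
  have finP: "finite P" unfolding P_def perms_def by (rule finite_permutations) simp
  have cardP: "card P = fact N" unfolding P_def perms_def by (rule card_permutations) simp_all
  have finT: "finite T" unfolding T_def vecs_sum_def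
    by (rule finite_subset[OF _ finite_PiE[of "{0..<N}" "\<lambda>_. UNIV::'a set"]]) auto
  have cardT: "real q ^ (N - 1) \<le> real (card T)"
    using card_vecs_sum[OF N1, of a0] unfolding T_def q_def by (metis of_nat_le_iff of_nat_power)
  have finFn: "finite Fn" unfolding Fn_def by (rule finite_PiE) auto
  have sm_eq: "second_moment m n x = SS / (real (card P) * real (card P) * real (card T))"
    unfolding second_moment_def Let_def SS_def P_def T_def a0_def N_def by simp
  have inner: "(\<Sum>t\<in>T. Y m n x t \<pi> * Y m n x t \<pi>') \<le> real q ^ N / real q ^ (2*n) * real (card {l\<in>Fn\<times>Fn. Cd l \<pi> \<pi>'})"
    if \<pi>P: "\<pi> \<in> P" and \<pi>'P: "\<pi>' \<in> P" for \<pi> \<pi>'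
  proof -
    have pp: "\<pi> permutes {..<m*n}" "\<pi>' permutes {..<m*n}" using \<pi>P \<pi>'P unfolding P_def N_def perms_iff by auto
    define C where "C t \<rho> = (\<forall>i<n. (\<Sum>j<m. t (\<rho> (m*i + j))) = x i)" for t :: "nat \<Rightarrow> 'a" and \<rho> :: "nat \<Rightarrow> nat"
    have "(\<Sum>t\<in>T. Y m n x t \<pi> * Y m n x t \<pi>') = (\<Sum>t\<in>T. if C t \<pi> \<and> C t \<pi>' then 1 else 0)"
      by (rule sum.cong) (simp_all add: Y_def C_def)
    also have "\<dots> = real (card {t\<in>T. C t \<pi> \<and> C t \<pi>'})" by (rule sum_indicator_card[OF finT])
    finally have e1: "(\<Sum>t\<in>T. Y m n x t \<pi> * Y m n x t \<pi>') = real (card {t\<in>T. C t \<pi> \<and> C t \<pi>'})" .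
    define So where "So = sols {..<N} {..<n} {..<n} (aa \<pi>) (aa \<pi>') x x"
    have key: "(\<Sum>e\<in>{e\<in>{..<N}. aa \<rho> e = i}. t e) = x i"
      if "i \<in> {..<n}" "\<rho> permutes {..<m*n}" "C t \<rho>" for i \<rho> t
      using Yeq[OF that(2), of i t] that unfolding C_def aa_def N_def by simp
    have sub: "{t\<in>T. C t \<pi> \<and> C t \<pi>'} \<subseteq> So"
    proof
      fix t assume t: "t \<in> {t\<in>T. C t \<pi> \<and> C t \<pi>'}"
      have tE: "t \<in> {..<N} \<rightarrow>\<^sub>E UNIV" using t unfolding T_def vecs_sum_def by (simp add: atLeast0LessThan)
      show "t \<in> So" unfolding So_def sols_def using tE t pp key by auto
    qed
    have finSo: "finite So" unfolding So_def sols_def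
      by (rule finite_subset[OF _ finite_PiE[of "{..<N}" "\<lambda>_. UNIV::'a set"]]) auto
    have LLeq: "LL {..<N} {..<n} {..<n} (aa \<pi>) (aa \<pi>') = {l\<in>Fn\<times>Fn. Cd l \<pi> \<pi>'}"
      unfolding LL_def Fn_def Cd_def by auto
    have lA: "card So * q ^ (card {..<n} + card {..<n}) \<le> q ^ card {..<N} * card (LL {..<N} {..<n} {..<n} (aa \<pi>) (aa \<pi>') :: ((nat\<Rightarrow>'a)\<times>(nat\<Rightarrow>'a)) set)"
    proof -
      have "aa \<rho> u < n" if "\<rho> permutes {..<m*n}" "u < N" for \<rho> u
      proof -
        have "inv \<rho> u < m*n" using permutes_in_image[OF permutes_inv[OF that(1)], of u] that(2) N_def by simp
        then show ?thesis unfolding aa_def using m0 by (simp add: div_less_iff_less_mult mult.commute)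
      qed
      then show ?thesis unfolding So_def q_def by (intro lemA) (use pp in auto)
    qed
    then have "card So * q^(2*n) \<le> q^N * card {l\<in>Fn\<times>Fn. Cd l \<pi> \<pi>'}" using LLeq by (simp add: mult_2)
    then have "real (card So * q^(2*n)) \<le> real (q^N * card {l\<in>Fn\<times>Fn. Cd l \<pi> \<pi>'})"
      by (simp only: of_nat_le_iff)
    then have "real (card So) \<le> real q ^ N / real q ^ (2*n) * real (card {l\<in>Fn\<times>Fn. Cd l \<pi> \<pi>'})"
      using qpos by (simp add: field_simps)
    moreover have "card {t\<in>T. C t \<pi> \<and> C t \<pi>'} \<le> card So" by (rule card_mono[OF finSo sub])
    ultimately show ?thesis unfolding e1 by linarith
  qed
  have perl: "(\<Sum>\<pi>\<in>P. \<Sum>\<pi>'\<in>P. if Cd (\<alpha>, \<gamma>) \<pi> \<pi>' then 1 else 0) \<le> fact N * Bf \<alpha> \<gamma>" for \<alpha> \<gamma>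
  proof -
    have "(\<Sum>\<pi>'\<in>P. if Cd (\<alpha>, \<gamma>) \<pi> \<pi>' then 1 else 0) \<le> Bf \<alpha> \<gamma>" if "\<pi> \<in> P" for \<pi>
    proof -
      have pp: "\<pi> permutes {..<m*n}" using that unfolding P_def N_def perms_iff .
      have "(\<Sum>\<pi>'\<in>P. if Cd (\<alpha>, \<gamma>) \<pi> \<pi>' then 1 else 0) = real (card {\<pi>'\<in>P. Cd (\<alpha>, \<gamma>) \<pi> \<pi>'})"
        by (rule sum_indicator_card[OF finP])
      also have "{\<pi>'\<in>P. Cd (\<alpha>, \<gamma>) \<pi> \<pi>'} = {\<pi>'\<in>perms (m*n). \<forall>u<m*n. \<alpha> (inv \<pi> u div m) = \<gamma> (inv \<pi>' u div m)}"
        unfolding P_def Cd_def aa_def N_def by simp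
      also have "real (card \<dots>) \<le> Bf \<alpha> \<gamma>"
        unfolding Bf_def cnt_def by (rule count_perms_bound[OF m0 pp])
      finally show ?thesis .
    qed
    then have "(\<Sum>\<pi>\<in>P. \<Sum>\<pi>'\<in>P. if Cd (\<alpha>, \<gamma>) \<pi> \<pi>' then 1 else 0) \<le> (\<Sum>\<pi>\<in>P. Bf \<alpha> \<gamma>)"
      by (rule sum_mono)
    also have "\<dots> = fact N * Bf \<alpha> \<gamma>" using cardP by simp
    finally show ?thesis .
  qed
  have SSb: "SS \<le> real q ^ N / real q ^ (2*n) * (fact N * (\<Sum>\<alpha>\<in>Fn. \<Sum>\<gamma>\<in>Fn. Bf \<alpha> \<gamma>))"
  proof -
    define c0 where "c0 = real q ^ N / real q ^ (2*n)"
    have c0pos: "0 \<le> c0" unfolding c0_def by simp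
    have "SS \<le> (\<Sum>\<pi>\<in>P. \<Sum>\<pi>'\<in>P. c0 * real (card {l\<in>Fn\<times>Fn. Cd l \<pi> \<pi>'}))"
      unfolding SS_def c0_def by (intro sum_mono inner)
    also have "\<dots> = c0 * (\<Sum>\<pi>\<in>P. \<Sum>\<pi>'\<in>P. \<Sum>l\<in>Fn\<times>Fn. if Cd l \<pi> \<pi>' then 1 else 0)"
      by (simp add: sum_distrib_left sum_indicator_card[OF finite_cartesian_product[OF finFn finFn]])
    finally have A: "SS \<le> c0 * (\<Sum>\<pi>\<in>P. \<Sum>\<pi>'\<in>P. \<Sum>l\<in>Fn\<times>Fn. if Cd l \<pi> \<pi>' then 1 else 0)" .
    have "(\<Sum>\<pi>\<in>P. \<Sum>\<pi>'\<in>P. \<Sum>l\<in>Fn\<times>Fn. if Cd l \<pi> \<pi>' then (1::real) else 0)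
        = (\<Sum>\<pi>\<in>P. \<Sum>l\<in>Fn\<times>Fn. \<Sum>\<pi>'\<in>P. if Cd l \<pi> \<pi>' then 1 else 0)"
      by (rule sum.cong[OF refl], rule sum.swap)
    also have "\<dots> = (\<Sum>l\<in>Fn\<times>Fn. \<Sum>\<pi>\<in>P. \<Sum>\<pi>'\<in>P. if Cd l \<pi> \<pi>' then 1 else 0)"
      by (rule sum.swap)
    also have "\<dots> \<le> (\<Sum>l\<in>Fn\<times>Fn. fact N * Bf (fst l) (snd l))"
    proof (rule sum_mono)
      fix l :: "(nat \<Rightarrow> 'a) \<times> (nat \<Rightarrow> 'a)"
      show "(\<Sum>\<pi>\<in>P. \<Sum>\<pi>'\<in>P. if Cd l \<pi> \<pi>' then 1 else 0) \<le> fact N * Bf (fst l) (snd l)"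
        using perl[of "fst l" "snd l"] by simp
    qed
    also have "\<dots> = fact N * (\<Sum>\<alpha>\<in>Fn. \<Sum>\<gamma>\<in>Fn. Bf \<alpha> \<gamma>)"
      by (simp add: sum_distrib_left sum.cartesian_product split_beta')
    finally have B: "(\<Sum>\<pi>\<in>P. \<Sum>\<pi>'\<in>P. \<Sum>l\<in>Fn\<times>Fn. if Cd l \<pi> \<pi>' then 1 else 0) \<le> fact N * (\<Sum>\<alpha>\<in>Fn. \<Sum>\<gamma>\<in>Fn. Bf \<alpha> \<gamma>)" .
    show ?thesis using A mult_left_mono[OF B c0pos] unfolding c0_def by linarith
  qed
  define SBB where "SBB = (\<Sum>\<alpha>\<in>Fn. \<Sum>\<gamma>\<in>Fn. Bf \<alpha> \<gamma>)"
  have Bf0: "0 \<le> Bf \<alpha> \<gamma>" for \<alpha> \<gamma> unfolding Bf_def by (auto intro!: prod_nonneg)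
  have SBB0: "0 \<le> SBB" unfolding SBB_def by (intro sum_nonneg Bf0)
  have Tpos: "0 < real (card T)" using cardT qpos by (metis less_le_trans zero_less_power of_nat_0_less_iff)
  have sm1: "second_moment m n x \<le> real q / real q ^ (2*n) * (SBB / fact N)"
  proof -
    have "second_moment m n x = SS / (fact N * fact N * real (card T))" using sm_eq cardP by simp
    also have "\<dots> \<le> (real q ^ N / real q ^ (2*n) * (fact N * SBB)) / (fact N * fact N * real (card T))"
      by (rule divide_right_mono[OF SSb[folded SBB_def]]) (use Tpos in simp)
    also have "\<dots> = real q ^ N / real q ^ (2*n) * SBB / (fact N * real (card T))"
      by (simp add: field_simps)
    also have "\<dots> \<le> real q ^ N / real q ^ (2*n) * SBB / (fact N * real q ^ (N - 1))"
      by (intro divide_left_mono mult_left_mono cardT mult_nonneg_nonneg SBB0) (use qpos Tpos in auto)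
    also have "\<dots> = real q / real q ^ (2*n) * (SBB / fact N)"
    proof -
      have "N = Suc (N - 1)" using N1 by simp
      then have "real q ^ N = real q * real q ^ (N - 1)" by (metis power_Suc)
      then show ?thesis using qpos by (simp add: field_simps)
    qed
    finally show ?thesis .
  qed
  have FSeq: "FS {..<n} (cnt \<alpha>) = {\<gamma>\<in>Fn. cnt \<gamma> = cnt \<alpha>}" for \<alpha>
    unfolding FS_def Fn_def cnt_def by (auto simp: fun_eq_iff)
  have S6: "SBB / fact N = (\<Sum>\<alpha>\<in>Fn. Ds (cnt \<alpha>) * cs (cnt \<alpha>))"
  proof -
    have "(\<Sum>\<gamma>\<in>Fn. Bf \<alpha> \<gamma>) / fact N = Ds (cnt \<alpha>) * cs (cnt \<alpha>)" for \<alpha>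
    proof -
      have "(\<Sum>\<gamma>\<in>Fn. Bf \<alpha> \<gamma>) = (\<Sum>\<gamma>\<in>Fn. if cnt \<gamma> = cnt \<alpha> then real (\<Prod>v\<in>UNIV. fact (m * cnt \<alpha> v)) else 0)"
        unfolding Bf_def by (rule sum.cong) auto
      also have "\<dots> = real (card {\<gamma>\<in>Fn. cnt \<gamma> = cnt \<alpha>}) * real (\<Prod>v\<in>UNIV. fact (m * cnt \<alpha> v))"
        using sum.inter_filter[OF finFn, of "\<lambda>_. real (\<Prod>v\<in>UNIV. fact (m * cnt \<alpha> v))" "\<lambda>\<gamma>. cnt \<gamma> = cnt \<alpha>"]
        by simp
      finally show ?thesis unfolding Ds_def cs_def FSeq by simp
    qed
    then show ?thesis unfolding SBB_def sum_divide_distrib by simp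
  qed
  have S7: "(\<Sum>\<alpha>\<in>Fn. Ds (cnt \<alpha>) * cs (cnt \<alpha>)) = (\<Sum>s\<in>cnt ` Fn. Ds s ^ 2 * cs s)"
  proof -
    have "(\<Sum>\<alpha>\<in>Fn. Ds (cnt \<alpha>) * cs (cnt \<alpha>)) = (\<Sum>\<alpha>\<in>Fn. (Ds (cnt \<alpha>) ^ 2 * cs (cnt \<alpha>)) / card {\<beta>\<in>Fn. cnt \<beta> = cnt \<alpha>})"
    proof (rule sum.cong[OF refl])
      fix \<alpha> assume "\<alpha> \<in> Fn"
      then have "card {\<beta>\<in>Fn. cnt \<beta> = cnt \<alpha>} > 0" using finFn by (auto simp: card_gt_0_iff)
      moreover have "Ds (cnt \<alpha>) = real (card {\<beta>\<in>Fn. cnt \<beta> = cnt \<alpha>})" unfolding Ds_def FSeq ..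
      ultimately show "Ds (cnt \<alpha>) * cs (cnt \<alpha>) = (Ds (cnt \<alpha>) ^ 2 * cs (cnt \<alpha>)) / card {\<beta>\<in>Fn. cnt \<beta> = cnt \<alpha>}"
        by (simp add: power2_eq_square)
    qed
    also have "\<dots> = (\<Sum>s\<in>cnt ` Fn. Ds s ^ 2 * cs s)"
      by (rule group_recip[OF finFn, where h="\<lambda>s. Ds s ^ 2 * cs s"])
    finally show ?thesis .
  qed
  have S8: "Ds s ^ 2 * cs s \<le> g (card {v. s v \<noteq> 0}) \<and> 1 \<le> card {v. s v \<noteq> 0} \<and> sum s UNIV = n"
    if sF: "s \<in> cnt ` Fn" for s
  proof -
    obtain \<alpha> where s: "s = cnt \<alpha>" using sF by auto
    show ?thesis using s_bound[OF n1 m3, of \<alpha>] unfolding s Ds_def cs_def g_def r_def N_def cnt_def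
      by (simp del: of_nat_diff)
  qed
  have rpos: "0 < r" unfolding r_def using n1 by simp
  have g0: "\<forall>k. 0 \<le> g k" unfolding g_def using rpos by simp
  have S9: "(\<Sum>s\<in>cnt ` Fn. Ds s ^ 2 * cs s) \<le> (\<Sum>k\<in>{1..q}. real q ^ k * r powr (real (k - 1) / 2))"
  proof -
    have "(\<Sum>s\<in>cnt ` Fn. Ds s ^ 2 * cs s) \<le> (\<Sum>s\<in>cnt ` Fn. g (card {v. s v \<noteq> 0}))"
      by (rule sum_mono) (use S8 in blast)
    also have "\<dots> \<le> (\<Sum>k\<in>{1..CARD('a)}. real ((CARD('a) choose k) * n ^ (k - 1)) * g k)"
      by (rule sum_over_s[OF finite_imageI[OF finFn]]) (use S8 g0 in auto)
    also have "\<dots> = (\<Sum>k\<in>{1..q}. real (q choose k) * r powr (real (k - 1) / 2))"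
      unfolding q_def g_def using n1 by (intro sum.cong) simp_all
    also have "\<dots> \<le> (\<Sum>k\<in>{1..q}. real q ^ k * r powr (real (k - 1) / 2))"
    proof (rule sum_mono)
      fix k assume "k \<in> {1..q}"
      then have "q choose k \<le> q ^ k" by (intro binomial_le_pow) simp
      then have "real (q choose k) \<le> real q ^ k" by (metis of_nat_le_iff of_nat_power)
      then show "real (q choose k) * r powr (real (k - 1) / 2) \<le> real q ^ k * r powr (real (k - 1) / 2)"
        by (rule mult_right_mono) simp
    qed
    finally show ?thesis .
  qed
  define f where "f k = real q ^ (k+1) / real q ^ (2*n - 1) * r powr (real k / 2)" for k
  have final_real: "second_moment m n x \<le> (\<Sum>k<q. f k)"
  proof -
    have "second_moment m n x \<le> real q / real q ^ (2*n) * (\<Sum>k\<in>{1..q}. real q ^ k * r powr (real (k - 1) / 2))"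
    proof -
      have e: "SBB / fact N \<le> (\<Sum>k\<in>{1..q}. real q ^ k * r powr (real (k - 1) / 2))" using S6 S7 S9 by simp
      have "real q / real q ^ (2*n) * (SBB / fact N) \<le> real q / real q ^ (2*n) * (\<Sum>k\<in>{1..q}. real q ^ k * r powr (real (k - 1) / 2))"
        by (rule mult_left_mono[OF e]) simp
      then show ?thesis using sm1 by linarith
    qed
    also have "(\<Sum>k\<in>{1..q}. real q ^ k * r powr (real (k - 1) / 2)) = (\<Sum>k<q. real q ^ Suc k * r powr (real k / 2))"
      using sum.atLeast1_atMost_eq[where g="\<lambda>k. real q ^ k * r powr (real (k - 1) / 2)" and n=q] by simp
    also have "real q / real q ^ (2*n) * \<dots> = (\<Sum>k<q. f k)"
    proof -
      have "2*n = Suc (2*n - 1)" using n1 by simp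
      then have "real q ^ (2*n) = real q * real q ^ (2*n - 1)" by (metis power_Suc)
      then show ?thesis unfolding f_def sum_distrib_left using qpos by (intro sum.cong) (simp_all add: field_simps)
    qed
    finally show ?thesis .
  qed
  have f0: "0 \<le> f k" for k unfolding f_def by simp
  have "ennreal (second_moment m n x) \<le> ennreal (\<Sum>k<q. f k)" by (rule ennreal_leI[OF final_real])
  also have "\<dots> = (\<Sum>k<q. ennreal (f k))" using f0 by simp
  also have "\<dots> \<le> (\<Sum>k. ennreal (f k))" by (rule sum_le_suminf) auto
  finally show ?thesis unfolding f_def q_def r_def .
qed



end
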